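(* Fix a replacement rule $\{p_{(R,\alpha)}(\mathbf{x})\}_{(R,\alpha)}$ satisfying the Fixation Axiom and a mutational bias $\nu\in(0,1)$. Then the following four conditions are equivalent: (a) $\rho_A>\rho_a$; (b) $\displaystyle\lim_{u\to 0}\mathbb{E}_{\mathrm{MSS}}[x]>\frac{\nu\, b(\mathbf{a})}{\nu\, b(\mathbf{a})+(1-\nu)\, b(\mathbf{A})}$; (c) $\mathbb{E}_{\mathrm{RMC}}[\Delta_{\mathrm{sel}}]>0$; (d) $\frac{d}{du}\mathbb{E}_{\mathrm{MSS}}[\Delta_{\mathrm{sel}}]\big|_{u=0}>0$.
   Context: Setting. $G$ is a finite nonempty set of genetic sites, $n=|G|$. A state is $\mathbf{x}=(x_g)_{g\in G}\in\{0,1\}^G$ ($x_g=1$: site $g$ carries allele $A$; $x_g=0$: allele $a$). For $S\subseteq G$, $\mathbf{1}_S$ is the state with $x_g=1$ iff $g\in S$; $\mathbf{a}=\mathbf{1}_\emptyset$, $\mathbf{A}=\mathbf{1}_G$. A replacement event is a pair $(R,\alpha)$ with $R\subseteq G$ and $\alpha:R\to G$. A replacement rule assigns to each state $\mathbf{x}$ a probability distribution $\{p_{(R,\alpha)}(\mathbf{x})\}_{(R,\alpha)}$ over all replacement events. Given a mutation probability $u\in[0,1]$ and mutational bias $\nu\in(0,1)$, the evolutionary Markov chain on $\{0,1\}^G$ moves from $\mathbf{x}$ to $\mathbf{x}'$ as follows: an event $(R,\alpha)$ is drawn with probability $p_{(R,\alpha)}(\mathbf{x})$; then, independently for each $g\in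 R$, $x'_g=x_{\alpha(g)}$ with probability $1-u$, $x'_g=1$ with probability $u\nu$, $x'_g=0$ with probability $u(1-\nu)$; for $g\notin R$, $x'_g=x_g$. $P^{(t)}_{\mathbf{x}\to\mathbf{y}}$ denotes the $t$-step transition probability. Fixation Axiom: there exist $g\in G$, $m\ge 1$ and events $(R_1,\alpha_1),\dots,(R_m,\alpha_m)$ with $p_{(R_k,\alpha_k)}(\mathbf{x})>0$ for all $k$ and all states $\mathbf{x}$, $g\in R_k$ for some $k$, and $\tilde\alpha_1\circ\cdots\circ\tilde\alpha_m(h)=g$ for all $h\in G$, where $\tilde\alpha_k:G\to G$ equals $\alpha_k$ on $R_k$ and the identity off $R_k$. Quantities. $e_{gh}(\mathbf{x})=\sum_{(R,\alpha):\,h\in R,\ \alpha(h)=g}p_{(R,\alpha)}(\mathbf{x})$; $b_g(\mathbf{x})=\sum_{h}e_{gh}(\mathbf{x})$; $d_g(\mathbf{x})=\sum_h e_{hg}(\mathbf{x})$; $b(\mathbf{x})=\sum_g b_g(\mathbf{x})$; $x=\frac1n\sum_g x_g$; $\Delta_{\mathrm{sel}}(\mathbf{x})=\sum_{g}x_g\big(b_g(\mathbf{x})-d_g(\mathbf{x})\big)$. Fixation probabilities (computed for $u=0$, where $\mathbf{a},\mathbf{A}$ are absorbing and absorption occurs a.s.): $\mu_A(\mathbf{1}_{\{g\}})=d_g(\mathbf{a})/b(\mathbf{a})$ and $\mu_A=0$ on other states; $\mu_a(\mathbf{1}_{G\setminus\{g\}})=d_g(\mathbf{A})/b(\mathbf{A})$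 and $\mu_a=0$ elsewhere; $\rho_A=\sum_{\mathbf{x}}\mu_A(\mathbf{x})\lim_{t\to\infty}P^{(t)}_{\mathbf{x}\to\mathbf{A}}$, $\rho_a=\sum_{\mathbf{x}}\mu_a(\mathbf{x})\lim_{t\to\infty}P^{(t)}_{\mathbf{x}\to\mathbf{a}}$. Distributions. For $u>0$ the chain has a unique stationary distribution $\pi_{\mathrm{MSS}}$; $\mathbb{E}_{\mathrm{MSS}}$ is expectation under it. Each $\pi_{\mathrm{MSS}}(\mathbf{x})$ extends smoothly to $u\in[0,1]$ (value at $0$ given by $\lim_{u\to0}$), and $\frac{d}{du}(\cdot)|_{u=0}$ denotes the one-sided derivative of this extension at $u=0$. The rare-mutation conditional distribution on $\{0,1\}^G\setminus\{\mathbf{a},\mathbf{A}\}$ is $\pi_{\mathrm{RMC}}(\mathbf{x})=\lim_{u\to0}\pi_{\mathrm{MSS}}(\mathbf{x})/\big(1-\pi_{\mathrm{MSS}}(\mathbf{a})-\pi_{\mathrm{MSS}}(\mathbf{A})\big)$ (the limit exists); $\mathbb{E}_{\mathrm{RMC}}$ is expectation under it. *)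

theory Defs
  imports "HOL-Analysis.Analysis"
begin

text \<open>A state is the set of sites carrying
allele A, so x_g = 1 iff g is in the state.  A replacement event (R, alpha) with
alpha : R -> G is represented canonically by the pair (R, alpha~), where alpha~ is the
identity outside R.\<close>

type_synonym 'g event = "'g set \<times> ('g \<Rightarrow> 'g)"
type_synonym 'g rule = "'g set \<Rightarrow> 'g event \<Rightarrow> real"

definition events :: "'g event set" where
  "events = {(R, \<alpha>). \<forall>g. g \<notin> R \<longrightarrow> \<alpha> g = g}"

definition replacement_rule :: "('g::finite) rule \<Rightarrow> bool" where
  "replacement_rule p \<longleftrightarrow>
     (\<forall>x. \<forall>e\<in>events. p x e \<ge> 0) \<and> (\<forall>x. (\<Sum>e\<in>events. p x e) = 1)"

definition fixation_axiom :: "('g::finite) rule \<Rightarrow> bool" where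
  "fixation_axiom p \<longleftrightarrow>
     (\<exists>g es. es \<noteq> [] \<and> (\<forall>e\<in>set es. e \<in> events \<and> (\<forall>x. p x e > 0))
        \<and> (\<exists>e\<in>set es. g \<in> fst e)
        \<and> (\<forall>h. foldr (\<lambda>e f. snd e \<circ> f) es id h = g))"

definition ee :: "('g::finite) rule \<Rightarrow> 'g \<Rightarrow> 'g \<Rightarrow> 'g set \<Rightarrow> real" where
  "ee p g h x = (\<Sum>e\<in>{(R, \<alpha>) \<in> events. h \<in> R \<and> \<alpha> h = g}. p x e)"

definition bb :: "('g::finite) rule \<Rightarrow> 'g \<Rightarrow> 'g set \<Rightarrow> real" where
  "bb p g x = (\<Sum>h\<in>UNIV. ee p g h x)"

definition dd :: "('g::finite) rule \<Rightarrow> 'g \<Rightarrow> 'g set \<Rightarrow> real" where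
  "dd p g x = (\<Sum>h\<in>UNIV. ee p h g x)"

definition btot :: "('g::finite) rule \<Rightarrow> 'g set \<Rightarrow> real" where
  "btot p x = (\<Sum>g\<in>UNIV. bb p g x)"

definition xbar :: "('g::finite) set \<Rightarrow> real" where
  "xbar x = real (card x) / real CARD('g)"

definition Delta_sel :: "('g::finite) rule \<Rightarrow> 'g set \<Rightarrow> real" where
  "Delta_sel p x = (\<Sum>g\<in>x. bb p g x - dd p g x)"

definition trans :: "('g::finite) rule \<Rightarrow> real \<Rightarrow> real \<Rightarrow> 'g set \<Rightarrow> 'g set \<Rightarrow> real" where
  "trans p u \<nu> x y =
     (\<Sum>(R, \<alpha>)\<in>events. p x (R, \<alpha>) *
        (\<Prod>g\<in>UNIV. if g \<in> R
           then (1 - u) * (if (g \<in> y) = (\<alpha> g \<in> x) then 1 else 0)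
                + u * (if g \<in> y then \<nu> else 1 - \<nu>)
           else (if (g \<in> y) = (g \<in> x) then 1 else 0)))"

fun transn :: "('g::finite) rule \<Rightarrow> real \<Rightarrow> real \<Rightarrow> nat \<Rightarrow> 'g set \<Rightarrow> 'g set \<Rightarrow> real" where
  "transn p u \<nu> 0 x y = (if x = y then 1 else 0)"
| "transn p u \<nu> (Suc t) x y = (\<Sum>z\<in>UNIV. transn p u \<nu> t x z * trans p u \<nu> z y)"

text \<open>Fixation probabilities (at u = 0; nu is irrelevant there).\<close>
definition rho_A :: "('g::finite) rule \<Rightarrow> real \<Rightarrow> real" where
  "rho_A p \<nu> = (\<Sum>g\<in>UNIV. dd p g {} / btot p {} *
                 lim (\<lambda>t. transn p 0 \<nu> t {g} UNIV))"

definition rho_a :: "('g::finite) rule \<Rightarrow> real \<Rightarrow> real" where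
  "rho_a p \<nu> = (\<Sum>g\<in>UNIV. dd p g UNIV / btot p UNIV *
                 lim (\<lambda>t. transn p 0 \<nu> t (UNIV - {g}) {}))"

definition stationary :: "('g::finite) rule \<Rightarrow> real \<Rightarrow> real \<Rightarrow> ('g set \<Rightarrow> real) \<Rightarrow> bool" where
  "stationary p u \<nu> \<pi> \<longleftrightarrow> (\<forall>x. \<pi> x \<ge> 0) \<and> (\<Sum>x\<in>UNIV. \<pi> x) = 1
      \<and> (\<forall>y. (\<Sum>x\<in>UNIV. \<pi> x * trans p u \<nu> x y) = \<pi> y)"

text \<open>The (unique, for u > 0) mutation-selection stationary distribution.\<close>
definition pi_MSS :: "('g::finite) rule \<Rightarrow> real \<Rightarrow> real \<Rightarrow> 'g set \<Rightarrow> real" where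
  "pi_MSS p u \<nu> = (THE \<pi>. stationary p u \<nu> \<pi>)"

definition E_MSS :: "('g::finite) rule \<Rightarrow> real \<Rightarrow> real \<Rightarrow> ('g set \<Rightarrow> real) \<Rightarrow> real" where
  "E_MSS p u \<nu> f = (\<Sum>x\<in>UNIV. pi_MSS p u \<nu> x * f x)"

definition pi_MSS_ext :: "('g::finite) rule \<Rightarrow> real \<Rightarrow> real \<Rightarrow> 'g set \<Rightarrow> real" where
  "pi_MSS_ext p u \<nu> x =
     (if u = 0 then Lim (at_right 0) (\<lambda>v. pi_MSS p v \<nu> x) else pi_MSS p u \<nu> x)"

definition E_MSS_ext :: "('g::finite) rule \<Rightarrow> real \<Rightarrow> real \<Rightarrow> ('g set \<Rightarrow> real) \<Rightarrow> real" where
  "E_MSS_ext p u \<nu> f = (\<Sum>x\<in>UNIV. pi_MSS_ext p u \<nu> x * f x)"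

definition right_deriv0 :: "(real \<Rightarrow> real) \<Rightarrow> real" where
  "right_deriv0 F = (THE D. (F has_real_derivative D) (at_right 0))"

definition pi_RMC :: "('g::finite) rule \<Rightarrow> real \<Rightarrow> 'g set \<Rightarrow> real" where
  "pi_RMC p \<nu> x = Lim (at_right 0)
     (\<lambda>u. pi_MSS p u \<nu> x / (1 - pi_MSS p u \<nu> {} - pi_MSS p u \<nu> UNIV))"

definition E_RMC :: "('g::finite) rule \<Rightarrow> real \<Rightarrow> ('g set \<Rightarrow> real) \<Rightarrow> real" where
  "E_RMC p \<nu> f = (\<Sum>x\<in>UNIV - {{}, UNIV}. pi_RMC p \<nu> x * f x)"

end

theory Submission
  imports Defs
begin


definition step :: "('g::finite) event \<Rightarrow> 'g set \<Rightarrow> 'g set" where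
  "step e x = {h. snd e h \<in> x}"

lemma events_finite: "finite (events :: ('g::finite) event set)"
  by (rule finite_subset[of _ UNIV]) auto

lemma prod_indic:
  fixes P :: "'g::finite \<Rightarrow> bool"
  shows "(\<Prod>g\<in>UNIV. if P g then 1 else 0) = (if \<forall>g. P g then 1 else (0::real))"
proof (cases "\<forall>g. P g")
  case True then show ?thesis by simp
next
  case False then obtain g where "\<not> P g" by blast
  then have "(\<Prod>g\<in>UNIV. if P g then 1 else (0::real)) = 0"
    by (subst prod_zero_iff) auto
  then show ?thesis using False by simp
qed

lemma sum_prod_split:
  fixes P N :: "'g::finite \<Rightarrow> real"
  shows "(\<Sum>y\<in>UNIV. \<Prod>g\<in>UNIV. if g \<in> y then P g else N g) = (\<Prod>g\<in>UNIV. P g + N g)"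
proof -
  have "(\<Prod>g\<in>UNIV. P g + N g) = (\<Sum>X\<in>Pow UNIV. (\<Prod>x\<in>X. P x) * (\<Prod>x\<in>UNIV-X. N x))"
    by (rule prod_add) simp
  also have "\<dots> = (\<Sum>y\<in>UNIV. \<Prod>g\<in>UNIV. if g \<in> y then P g else N g)"
  proof (rule sum.cong)
    fix y :: "'g set" 
    have "(\<Prod>g\<in>UNIV. if g \<in> y then P g else N g) = prod P (UNIV \<inter> {g. g \<in> y}) * prod N (UNIV \<inter> - {g. g \<in> y})"
      by (rule prod.If_cases) simp
    also have "\<dots> = (\<Prod>x\<in>y. P x) * (\<Prod>x\<in>UNIV-y. N x)"
      by (simp add: Compl_eq_Diff_UNIV)
    finally show "(\<Prod>x\<in>y. P x) * (\<Prod>x\<in>UNIV-y. N x) = (\<Prod>g\<in>UNIV. if g \<in> y then P g else N g)" by simp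
  qed simp
  finally show ?thesis by simp
qed

definition fac :: "real \<Rightarrow> real \<Rightarrow> 'g set \<Rightarrow> 'g set \<Rightarrow> 'g event \<Rightarrow> 'g \<Rightarrow> real" where
  "fac u \<nu> x y e g = (if g \<in> fst e
           then (1 - u) * (if (g \<in> y) = (snd e g \<in> x) then 1 else 0)
                + u * (if g \<in> y then \<nu> else 1 - \<nu>)
           else (if (g \<in> y) = (g \<in> x) then 1 else 0))"

lemma trans_fac: "trans p u \<nu> x y = (\<Sum>e\<in>events. p x e * (\<Prod>g\<in>UNIV. fac u \<nu> x y e g))"
  unfolding trans_def fac_def
  by (rule sum.cong, simp) (simp add: case_prod_beta)

lemma replD: assumes "replacement_rule p"
  shows "\<And>x e. e \<in> events \<Longrightarrow> p x e \<ge> 0" "\<And>x. (\<Sum>e\<in>events. p x e) = 1"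
  using assms unfolding replacement_rule_def by auto

lemma fac_sum: fixes e :: "('g::finite) event" shows "(\<Sum>y\<in>UNIV. \<Prod>g\<in>UNIV. fac u \<nu> x y e g) = 1"
proof -
  define P where "P g = (if g \<in> fst e then (1 - u) * (if snd e g \<in> x then 1 else 0) + u * \<nu>
      else (if g \<in> x then 1 else 0))" for g
  define N where "N g = (if g \<in> fst e then (1 - u) * (if snd e g \<in> x then 0 else 1) + u * (1-\<nu>)
      else (if g \<in> x then 0 else 1))" for g
  have "\<And>y. (\<Prod>g\<in>UNIV. fac u \<nu> x y e g) = (\<Prod>g\<in>UNIV. if g \<in> y then P g else N g)"
    by (rule prod.cong) (auto simp: fac_def P_def N_def)
  then have "(\<Sum>y\<in>UNIV. \<Prod>g\<in>UNIV. fac u \<nu> x y e g) = (\<Prod>g\<in>UNIV. P g + N g)"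
    using sum_prod_split[of P N] by simp
  also have "\<dots> = 1" by (rule prod.neutral) (auto simp: P_def N_def algebra_simps)
  finally show ?thesis .
qed

lemma trans_sum: assumes "replacement_rule p"
  shows "(\<Sum>y\<in>UNIV. trans p u \<nu> x y) = 1"
proof -
  have "(\<Sum>y\<in>UNIV. trans p u \<nu> x y) = (\<Sum>e\<in>events. p x e * (\<Sum>y\<in>UNIV. \<Prod>g\<in>UNIV. fac u \<nu> x y e g))"
    unfolding trans_fac by (simp add: sum_distrib_left sum.swap[of _ UNIV])
  also have "\<dots> = 1" using replD[OF assms] by (simp add: fac_sum)
  finally show ?thesis .
qed

lemma fac_nonneg: "0 \<le> u \<Longrightarrow> u \<le> 1 \<Longrightarrow> 0 \<le> \<nu> \<Longrightarrow> \<nu> \<le> 1 \<Longrightarrow> fac u \<nu> x y e g \<ge> 0"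
  unfolding fac_def by auto

lemma trans_nonneg: assumes "replacement_rule p" "0 \<le> u" "u \<le> 1" "0 \<le> \<nu>" "\<nu> \<le> 1"
  shows "trans p u \<nu> x y \<ge> 0"
  unfolding trans_fac using replD[OF assms(1)] fac_nonneg[OF assms(2-)]
  by (intro sum_nonneg mult_nonneg_nonneg prod_nonneg) auto

lemma trans0: "trans p 0 \<nu> x y = (\<Sum>e\<in>events. p x e * (if y = step e x then 1 else 0))"
  unfolding trans_fac
proof (rule sum.cong)
  fix e :: "'a event" assume e: "e \<in> events"
  have "(\<Prod>g\<in>UNIV. fac 0 \<nu> x y e g) = (\<Prod>g\<in>UNIV. if (g \<in> y) = (snd e g \<in> x) then 1 else 0)"
    using e by (intro prod.cong) (auto simp: fac_def events_def split: prod.splits)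
  also have "\<dots> = (if y = step e x then 1 else 0)"
    by (subst prod_indic) (auto simp: step_def)
  finally show "p x e * (\<Prod>g\<in>UNIV. fac 0 \<nu> x y e g) = p x e * (if y = step e x then 1 else 0)" by simp
qed simp


lemma sum_delta_mult[simp]: fixes f :: "'a::finite \<Rightarrow> real"
  shows "(\<Sum>z\<in>UNIV. f z * (if z = y then 1 else 0)) = f y"
        "(\<Sum>z\<in>UNIV. (if y = z then 1 else 0) * f z) = f y"
        "(\<Sum>z\<in>UNIV. f z * (if y = z then 1 else 0)) = f y"
        "(\<Sum>z\<in>UNIV. (if z = y then 1 else 0) * f z) = f y"
proof -
  have "(\<Sum>z\<in>UNIV. f z * (if z = y then 1 else 0)) = (\<Sum>z\<in>UNIV. if z = y then f z else 0)" by (rule sum.cong) auto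
  then show "(\<Sum>z\<in>UNIV. f z * (if z = y then 1 else 0)) = f y" by simp
  have "(\<Sum>z\<in>UNIV. (if y = z then 1 else 0) * f z) = (\<Sum>z\<in>UNIV. if y = z then f z else 0)" by (rule sum.cong) auto
  then show "(\<Sum>z\<in>UNIV. (if y = z then 1 else 0) * f z) = f y" by simp
  have "(\<Sum>z\<in>UNIV. f z * (if y = z then 1 else 0)) = (\<Sum>z\<in>UNIV. if y = z then f z else 0)" by (rule sum.cong) auto
  then show "(\<Sum>z\<in>UNIV. f z * (if y = z then 1 else 0)) = f y" by simp
  have "(\<Sum>z\<in>UNIV. (if z = y then 1 else 0) * f z) = (\<Sum>z\<in>UNIV. if z = y then f z else 0)" by (rule sum.cong) auto
  then show "(\<Sum>z\<in>UNIV. (if z = y then 1 else 0) * f z) = f y" by simp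
qed

lemma transn_1: "transn p u \<nu> (Suc 0) x y = trans p u \<nu> x y"
  by (simp add: sum_delta_mult)

lemma transn_add: "transn p u \<nu> (s + t) x y = (\<Sum>z\<in>UNIV. transn p u \<nu> s x z * transn p u \<nu> t z y)"
proof (induction t arbitrary: y)
  case 0
  then show ?case by (simp add: sum_delta_mult)
next
  case (Suc t)
  have "transn p u \<nu> (s + Suc t) x y = (\<Sum>w\<in>UNIV. transn p u \<nu> (s + t) x w * trans p u \<nu> w y)"
    by simp
  also have "\<dots> = (\<Sum>w\<in>UNIV. \<Sum>z\<in>UNIV. transn p u \<nu> s x z * transn p u \<nu> t z w * trans p u \<nu> w y)"
    by (simp add: Suc sum_distrib_right)
  also have "\<dots> = (\<Sum>z\<in>UNIV. transn p u \<nu> s x z * (\<Sum>w\<in>UNIV. transn p u \<nu> t z w * trans p u \<nu> w y))"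
    by (subst sum.swap) (simp add: sum_distrib_left mult.assoc)
  finally show ?case by simp
qed

lemma transn_Suc_left: "transn p u \<nu> (Suc t) x y = (\<Sum>z\<in>UNIV. trans p u \<nu> x z * transn p u \<nu> t z y)"
  using transn_add[of p u \<nu> "Suc 0" t x y] by (simp add: transn_1)

lemma transn_nonneg: assumes "replacement_rule p" "0 \<le> u" "u \<le> 1" "0 \<le> \<nu>" "\<nu> \<le> 1"
  shows "transn p u \<nu> t x y \<ge> 0"
proof (induction t arbitrary: y)
  case 0 then show ?case by simp
next
  case (Suc t)
  show ?case unfolding transn.simps
    by (rule sum_nonneg, rule mult_nonneg_nonneg, rule Suc, rule trans_nonneg[OF assms])
qed

lemma transn_sum: assumes "replacement_rule p"
  shows "(\<Sum>y\<in>UNIV. transn p u \<nu> t x y) = 1"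
proof (induction t)
  case 0
  then show ?case by simp
next
  case (Suc t)
  have "(\<Sum>y\<in>UNIV. transn p u \<nu> (Suc t) x y) = (\<Sum>z\<in>UNIV. transn p u \<nu> t x z * (\<Sum>y\<in>UNIV. trans p u \<nu> z y))"
    by (simp only: transn.simps sum_distrib_left sum_distrib_right mult.assoc) (rule sum.swap)
  also have "\<dots> = 1" using Suc by (simp add: trans_sum[OF assms])
  finally show ?case .
qed

lemma transn_le1: assumes "replacement_rule p" "0 \<le> u" "u \<le> 1" "0 \<le> \<nu>" "\<nu> \<le> 1"
  shows "transn p u \<nu> t x y \<le> 1"
proof -
  have "transn p u \<nu> t x y \<le> (\<Sum>y\<in>UNIV. transn p u \<nu> t x y)"
    by (rule member_le_sum) (auto intro: transn_nonneg[OF assms])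
  then show ?thesis using transn_sum[OF assms(1)] by simp
qed

lemma trans_le1: assumes "replacement_rule p" "0 \<le> u" "u \<le> 1" "0 \<le> \<nu>" "\<nu> \<le> 1"
  shows "trans p u \<nu> x y \<le> 1"
  using transn_le1[OF assms, of "Suc 0"] by (simp add: transn_1)

lemma step_empty: "e \<in> events \<Longrightarrow> step e {} = {}" by (simp add: step_def)
lemma step_UNIV: "e \<in> events \<Longrightarrow> step e UNIV = UNIV" by (simp add: step_def)

lemma trans0_empty: assumes "replacement_rule p"
  shows "trans p 0 \<nu> {} y = (if y = {} then 1 else 0)"
  unfolding trans0 using replD[OF assms] by (auto simp: step_empty cong: sum.cong)

lemma trans0_UNIV: assumes "replacement_rule p"
  shows "trans p 0 \<nu> UNIV y = (if y = UNIV then 1 else 0)"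
  unfolding trans0 using replD[OF assms] by (auto simp: step_UNIV cong: sum.cong)

lemma transn0_empty: assumes "replacement_rule p"
  shows "transn p 0 \<nu> t {} y = (if y = {} then 1 else 0)"
  by (induction t arbitrary: y) (simp_all add: trans0_empty[OF assms] sum_delta_mult)

lemma transn0_UNIV: assumes "replacement_rule p"
  shows "transn p 0 \<nu> t UNIV y = (if y = UNIV then 1 else 0)"
  by (induction t arbitrary: y) (simp_all add: trans0_UNIV[OF assms] sum_delta_mult)

fun runf :: "('e \<Rightarrow> 's \<Rightarrow> 's) \<Rightarrow> 'e list \<Rightarrow> 's \<Rightarrow> 's" where
  "runf f [] x = x"
| "runf f (e # es) x = runf f es (f e x)"

lemma path_lemma:
  assumes "replacement_rule p" "0 \<le> u" "u \<le> 1" "0 \<le> \<nu>" "\<nu> \<le> 1" "0 \<le> w"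
    and "\<And>x e. e \<in> set es \<Longrightarrow> trans p u \<nu> x (f e x) \<ge> w"
  shows "transn p u \<nu> (length es) x (runf f es x) \<ge> w ^ length es"
  using assms(7)
proof (induction es arbitrary: x)
  case Nil
  then show ?case by simp
next
  case (Cons e es)
  have "w ^ length (e # es) = w * w ^ length es" by simp
  also have "\<dots> \<le> trans p u \<nu> x (f e x) * transn p u \<nu> (length es) (f e x) (runf f es (f e x))"
    using Cons assms(6) by (intro mult_mono) (auto intro: trans_nonneg[OF assms(1-5)])
  also have "\<dots> \<le> (\<Sum>z\<in>UNIV. trans p u \<nu> x z * transn p u \<nu> (length es) z (runf f es (f e x)))"
  proof (rule member_le_sum)
    fix z assume "z \<in> UNIV - {f e x}"
    show "0 \<le> trans p u \<nu> x z * transn p u \<nu> (length es) z (runf f es (f e x))"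
      using trans_nonneg[OF assms(1-5)] transn_nonneg[OF assms(1-5)] by (simp add: mult_nonneg_nonneg)
  qed simp_all
  also have "\<dots> = transn p u \<nu> (length (e # es)) x (runf f (e # es) x)"
    by (simp only: length_Cons transn_Suc_left runf.simps)
  finally show ?case .
qed


lemma ee_alt: "ee p g h x = (\<Sum>e\<in>events. if h \<in> fst e \<and> snd e h = g then p x e else 0)"
  unfolding ee_def
  by (subst sum.inter_filter[symmetric]) (auto simp: events_finite case_prod_beta intro!: sum.cong)

lemma dd_alt: "dd p g x = (\<Sum>e\<in>events. if g \<in> fst e then p x e else 0)"
proof -
  have "dd p g x = (\<Sum>h\<in>UNIV. \<Sum>e\<in>events. if g \<in> fst e \<and> snd e g = h then p x e else 0)"
    unfolding dd_def ee_alt ..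
  also have "\<dots> = (\<Sum>e\<in>events. \<Sum>h\<in>UNIV. if g \<in> fst e \<and> snd e g = h then p x e else 0)"
    by (rule sum.swap)
  also have "\<dots> = (\<Sum>e\<in>events. if g \<in> fst e then p x e else 0)"
  proof (rule sum.cong)
    fix e :: "'a event"
    show "(\<Sum>h\<in>UNIV. if g \<in> fst e \<and> snd e g = h then p x e else 0) = (if g \<in> fst e then p x e else 0)"
      by (cases "g \<in> fst e") auto
  qed simp
  finally show ?thesis .
qed

lemma btot_dd: "btot p x = (\<Sum>g\<in>UNIV. dd p g x)"
  unfolding btot_def bb_def dd_def by (rule sum.swap)

lemma fixation_sites:
  fixes es :: "('g::finite) event list"
  assumes "\<forall>e\<in>set es. e \<in> events" "h \<notin> (\<Union>e\<in>set es. fst e)"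
  shows "foldr (\<lambda>e f. snd e \<circ> f) es id h = h"
  using assms by (induction es) (auto simp: events_def)

lemma runf_step: "runf step es x = {h. foldr (\<lambda>e f. snd e \<circ> f) es id h \<in> x}"
  by (induction es arbitrary: x) (auto simp: step_def)

lemma runf_minus: "runf (\<lambda>e x. x - fst e) es x = x - (\<Union>e\<in>set es. fst e)"
  by (induction es arbitrary: x) auto

lemma trans0_ge: assumes "replacement_rule p" "e \<in> events"
  shows "trans p 0 \<nu> x (step e x) \<ge> p x e"
proof -
  have "p x e = p x e * (if step e x = step e x then 1 else 0)" by simp
  also have "\<dots> \<le> trans p 0 \<nu> x (step e x)"
    unfolding trans0
    by (rule member_le_sum[where f="\<lambda>e'. p x e' * (if step e x = step e' x then 1 else 0)"])
       (use assms replD[OF assms(1)] in auto)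
  finally show ?thesis .
qed

lemma trans_mut_ge: fixes x :: "'g::finite set" assumes "replacement_rule p" "e \<in> events" "0 \<le> u" "u \<le> 1" "0 \<le> \<nu>" "\<nu> \<le> 1"
  shows "trans p u \<nu> x (x - fst e) \<ge> p x e * (u * (1 - \<nu>)) ^ CARD('g)"
proof -
  have f: "(u * (1 - \<nu>)) \<le> fac u \<nu> x (x - fst e) e g" for g
  proof (cases "g \<in> fst e")
    case True
    then show ?thesis using assms(3-6) by (auto simp: fac_def)
  next
    case False
    have "u * (1 - \<nu>) \<le> 1 * 1" using assms(3-6) by (intro mult_mono) auto
    then show ?thesis using False by (auto simp: fac_def)
  qed
  have "(u * (1 - \<nu>)) ^ CARD('g) = (\<Prod>g\<in>(UNIV::'g set). u * (1 - \<nu>))" by simp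
  also have "\<dots> \<le> (\<Prod>g\<in>UNIV. fac u \<nu> x (x - fst e) e g)"
    by (rule prod_mono) (use f assms(3-6) in auto)
  finally have pr: "(u * (1 - \<nu>)) ^ CARD('g) \<le> (\<Prod>g\<in>UNIV. fac u \<nu> x (x - fst e) e g)" .
  have "p x e * (u * (1 - \<nu>)) ^ CARD('g) \<le> p x e * (\<Prod>g\<in>UNIV. fac u \<nu> x (x - fst e) e g)"
    using pr replD(1)[OF assms(1,2)] by (rule mult_left_mono)
  also have "\<dots> \<le> trans p u \<nu> x (x - fst e)"
    unfolding trans_fac
    by (rule member_le_sum[where f="\<lambda>e'. p x e' * (\<Prod>g\<in>UNIV. fac u \<nu> x (x - fst e) e' g)"])
       (use assms replD[OF assms(1)] fac_nonneg[OF assms(3-6)] in \<open>auto intro!: mult_nonneg_nonneg prod_nonneg\<close>)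
  finally show ?thesis .
qed

definition TR :: "('g::finite) set set" where "TR = UNIV - {{}, UNIV}"

locale fixsetup =
  fixes p :: "('g::finite) rule" and \<nu> :: real
  assumes rep: "replacement_rule p" and fixax: "fixation_axiom p"
    and nu0: "0 < \<nu>" and nu1: "\<nu> < 1"
begin

definition "g0 = (SOME g. \<exists>es. es \<noteq> [] \<and> (\<forall>e\<in>set es. e \<in> events \<and> (\<forall>x. p x e > 0))
        \<and> (\<exists>e\<in>set es. g \<in> fst e)
        \<and> (\<forall>h. foldr (\<lambda>e f. snd e \<circ> f) es id h = g))"

definition "fes = (SOME es. es \<noteq> [] \<and> (\<forall>e\<in>set es. e \<in> events \<and> (\<forall>x. p x e > 0))
        \<and> (\<exists>e\<in>set es. g0 \<in> fst e)
        \<and> (\<forall>h. foldr (\<lambda>e f. snd e \<circ> f) es id h = g0))"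

lemma fes: "fes \<noteq> []" "\<And>e. e \<in> set fes \<Longrightarrow> e \<in> events" "\<And>e x. e \<in> set fes \<Longrightarrow> p x e > 0"
  "\<exists>e\<in>set fes. g0 \<in> fst e" "\<And>h. foldr (\<lambda>e f. snd e \<circ> f) fes id h = g0"
proof -
  have "\<exists>es. es \<noteq> [] \<and> (\<forall>e\<in>set es. e \<in> events \<and> (\<forall>x. p x e > 0))
        \<and> (\<exists>e\<in>set es. g0 \<in> fst e)
        \<and> (\<forall>h. foldr (\<lambda>e f. snd e \<circ> f) es id h = g0)"
    unfolding g0_def by (rule someI_ex) (use fixax[unfolded fixation_axiom_def] in blast)
  then have "fes \<noteq> [] \<and> (\<forall>e\<in>set fes. e \<in> events \<and> (\<forall>x. p x e > 0))
        \<and> (\<exists>e\<in>set fes. g0 \<in> fst e)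
        \<and> (\<forall>h. foldr (\<lambda>e f. snd e \<circ> f) fes id h = g0)"
    unfolding fes_def by (rule someI_ex)
  then show "fes \<noteq> []" "\<And>e. e \<in> set fes \<Longrightarrow> e \<in> events" "\<And>e x. e \<in> set fes \<Longrightarrow> p x e > 0"
  "\<exists>e\<in>set fes. g0 \<in> fst e" "\<And>h. foldr (\<lambda>e f. snd e \<circ> f) fes id h = g0" by auto
qed

definition "mm = length fes"
definition "cmin = Min {p x e | x e. e \<in> set fes}"

lemma mm_pos: "mm > 0" using fes(1) by (simp add: mm_def)

lemma cmin: "cmin > 0" "\<And>x e. e \<in> set fes \<Longrightarrow> cmin \<le> p x e"
proof -
  have fin: "finite {p x e | x e. e \<in> set fes}"
  proof -
    have "{p x e | x e. e \<in> set fes} = (\<lambda>(x,e). p x e) ` (UNIV \<times> set fes)" by auto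
    then show ?thesis by simp
  qed
  have ne: "{p x e | x e. e \<in> set fes} \<noteq> {}" using fes(1) by (cases fes) auto
  show "cmin > 0" unfolding cmin_def using fin ne fes(3) by (subst Min_gr_iff) auto
  show "\<And>x e. e \<in> set fes \<Longrightarrow> cmin \<le> p x e" unfolding cmin_def using fin by (intro Min_le) auto
qed

lemma union_fes: "(\<Union>e\<in>set fes. fst e) = UNIV"
proof (rule ccontr)
  assume "(\<Union>e\<in>set fes. fst e) \<noteq> UNIV"
  then obtain h where h: "h \<notin> (\<Union>e\<in>set fes. fst e)" by blast
  then have "foldr (\<lambda>e f. snd e \<circ> f) fes id h = h" using fes(2) by (intro fixation_sites) auto
  then have "h = g0" using fes(5) by simp
  then show False using h fes(4) by auto
qed

lemma run_fes: "runf step fes x = (if g0 \<in> x then UNIV else {})"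
  unfolding runf_step fes(5) by auto

definition "del0 = cmin ^ mm"

lemma del0_pos: "del0 > 0" using cmin by (simp add: del0_def)

lemma del0_le1: "del0 \<le> 1"
proof -
  obtain e where e: "e \<in> set fes" using fes(1) by (cases fes) auto
  have "cmin \<le> p {} e" using cmin(2)[OF e] .
  also have "p {} e \<le> (\<Sum>e\<in>events. p {} e)"
    by (rule member_le_sum) (use e fes(2) replD[OF rep] events_finite in auto)
  finally have "cmin \<le> 1" using replD(2)[OF rep] by simp
  then show ?thesis unfolding del0_def using cmin(1) by (simp add: power_le_one)
qed

lemma absorb_bound: "transn p 0 \<nu> mm x (runf step fes x) \<ge> del0"
  unfolding del0_def mm_def
proof (rule path_lemma[OF rep])
  fix x e assume e: "e \<in> set fes"
  show "cmin \<le> trans p 0 \<nu> x (step e x)"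
    using cmin(2)[OF e, of x] trans0_ge[OF rep fes(2)[OF e], where x=x and \<nu>=\<nu>] by linarith
qed (use cmin(1) nu0 nu1 in auto)

lemma TR_bound: "(\<Sum>y\<in>TR. transn p 0 \<nu> mm x y) \<le> 1 - del0"
proof -
  let ?z = "runf step fes x"
  have z: "?z \<notin> TR" unfolding run_fes TR_def by auto
  have "(\<Sum>y\<in>TR. transn p 0 \<nu> mm x y) + transn p 0 \<nu> mm x ?z = (\<Sum>y\<in>insert ?z TR. transn p 0 \<nu> mm x y)"
    using z by simp
  also have "\<dots> \<le> (\<Sum>y\<in>UNIV. transn p 0 \<nu> mm x y)"
    by (rule sum_mono2) (use transn_nonneg[OF rep] nu0 nu1 in auto)
  also have "\<dots> = 1" by (rule transn_sum[OF rep])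
  finally show ?thesis using absorb_bound[of x] by linarith
qed

lemma doeblin: assumes "0 < u" "u \<le> 1"
  shows "transn p u \<nu> mm x {} \<ge> (cmin * (u * (1 - \<nu>)) ^ CARD('g)) ^ mm"
proof -
  have "(cmin * (u * (1 - \<nu>)) ^ CARD('g)) ^ mm \<le> transn p u \<nu> mm x (runf (\<lambda>e x. x - fst e) fes x)"
    unfolding mm_def
  proof (rule path_lemma[OF rep])
    fix x e assume e: "e \<in> set fes"
    have "cmin * (u * (1 - \<nu>)) ^ CARD('g) \<le> p x e * (u * (1 - \<nu>)) ^ CARD('g)"
      using cmin(2)[OF e] assms nu1 by (intro mult_right_mono) auto
    also have "\<dots> \<le> trans p u \<nu> x (x - fst e)"
      by (rule trans_mut_ge[OF rep fes(2)[OF e]]) (use assms nu0 nu1 in auto)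
    finally show "cmin * (u * (1 - \<nu>)) ^ CARD('g) \<le> trans p u \<nu> x (x - fst e)" .
  qed (use cmin(1) nu0 nu1 assms in auto)
  also have "runf (\<lambda>e x. x - fst e) fes x = {}" unfolding runf_minus union_fes by simp
  finally show ?thesis .
qed

lemma btot_pos: "btot p x > 0"
proof -
  obtain e where e: "e \<in> set fes" "g0 \<in> fst e" using fes(4) by blast
  have "p x e = (if g0 \<in> fst e then p x e else 0)" using e by simp
  also have "\<dots> \<le> dd p g0 x" unfolding dd_alt
    by (rule member_le_sum[where f="\<lambda>e. if g0 \<in> fst e then p x e else 0"])
       (use e fes(2) replD[OF rep] events_finite in auto)
  finally have "p x e \<le> dd p g0 x" .
  also have "\<dots> \<le> btot p x" unfolding btot_dd
    by (rule member_le_sum) (auto simp: dd_alt intro!: sum_nonneg replD[OF rep])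
  finally show ?thesis using fes(3)[OF e(1), of x] by linarith
qed

lemma dd_nonneg: "dd p g x \<ge> 0"
  by (auto simp: dd_alt intro!: sum_nonneg replD[OF rep])

lemma dd_g0_pos: "dd p g0 x > 0"
proof -
  obtain e where e: "e \<in> set fes" "g0 \<in> fst e" using fes(4) by blast
  have "p x e = (if g0 \<in> fst e then p x e else 0)" using e by simp
  also have "\<dots> \<le> dd p g0 x" unfolding dd_alt
    by (rule member_le_sum[where f="\<lambda>e. if g0 \<in> fst e then p x e else 0"])
       (use e fes(2) replD[OF rep] events_finite in auto)
  finally show ?thesis using fes(3)[OF e(1), of x] by linarith
qed

end


lemma contraction:
  fixes K :: "'s::finite \<Rightarrow> 's \<Rightarrow> real"
  assumes nn: "\<And>x y. K x y \<ge> 0" and lb: "\<And>x. K x zz \<ge> \<epsilon>"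
    and rs: "\<And>x. (\<Sum>y\<in>UNIV. K x y) = 1" and w0: "(\<Sum>x\<in>UNIV. w x) = 0"
  shows "(\<Sum>y\<in>UNIV. \<bar>\<Sum>x\<in>UNIV. w x * K x y\<bar>) \<le> (1 - \<epsilon>) * (\<Sum>x\<in>UNIV. \<bar>w x\<bar>)"
proof -
  define K' where "K' x y = K x y - (if y = zz then \<epsilon> else 0)" for x y
  have K'nn: "K' x y \<ge> 0" for x y using nn lb by (auto simp: K'_def)
  have eq: "(\<Sum>x\<in>UNIV. w x * K x y) = (\<Sum>x\<in>UNIV. w x * K' x y)" for y
  proof -
    have "(\<Sum>x\<in>UNIV. w x * K' x y) = (\<Sum>x\<in>UNIV. w x * K x y) - (\<Sum>x\<in>UNIV. w x) * (if y = zz then \<epsilon> else 0)"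
      by (simp only: K'_def right_diff_distrib sum_subtractf sum_distrib_right)
    then show ?thesis using w0 by simp
  qed
  have "(\<Sum>y\<in>UNIV. \<bar>\<Sum>x\<in>UNIV. w x * K x y\<bar>) \<le> (\<Sum>y\<in>UNIV. \<Sum>x\<in>UNIV. \<bar>w x\<bar> * K' x y)"
  proof (rule sum_mono)
    fix y
    have "\<bar>\<Sum>x\<in>UNIV. w x * K' x y\<bar> \<le> (\<Sum>x\<in>UNIV. \<bar>w x * K' x y\<bar>)" by (rule sum_abs)
    also have "\<dots> = (\<Sum>x\<in>UNIV. \<bar>w x\<bar> * K' x y)" using K'nn by (simp add: abs_mult)
    finally show "\<bar>\<Sum>x\<in>UNIV. w x * K x y\<bar> \<le> (\<Sum>x\<in>UNIV. \<bar>w x\<bar> * K' x y)" by (simp add: eq)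
  qed
  also have "\<dots> = (\<Sum>x\<in>UNIV. \<bar>w x\<bar> * (\<Sum>y\<in>UNIV. K' x y))"
    by (subst sum.swap) (simp add: sum_distrib_left)
  also have "\<dots> = (\<Sum>x\<in>UNIV. \<bar>w x\<bar> * (1 - \<epsilon>))"
  proof -
    have "(\<Sum>y\<in>UNIV. K' x y) = 1 - \<epsilon>" for x
      unfolding K'_def by (simp add: sum_subtractf rs)
    then show ?thesis by simp
  qed
  also have "\<dots> = (1 - \<epsilon>) * (\<Sum>x\<in>UNIV. \<bar>w x\<bar>)" by (simp add: sum_distrib_left mult.commute)
  finally show ?thesis .
qed

fun iterK :: "('s::finite \<Rightarrow> 's \<Rightarrow> real) \<Rightarrow> 's \<Rightarrow> nat \<Rightarrow> 's \<Rightarrow> real" where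
  "iterK K z 0 y = (if y = z then 1 else 0)"
| "iterK K z (Suc k) y = (\<Sum>x\<in>UNIV. iterK K z k x * K x y)"

lemma kernel_fixpoint:
  fixes K :: "'s::finite \<Rightarrow> 's \<Rightarrow> real"
  assumes nn: "\<And>x y. K x y \<ge> 0" and lb: "\<And>x. K x zz \<ge> \<epsilon>" and ep: "\<epsilon> > 0"
    and rs: "\<And>x. (\<Sum>y\<in>UNIV. K x y) = 1"
  shows "\<exists>\<pi>. (\<forall>x. \<pi> x \<ge> 0) \<and> (\<Sum>x\<in>UNIV. \<pi> x) = 1 \<and> (\<forall>y. (\<Sum>x\<in>UNIV. \<pi> x * K x y) = \<pi> y)"
proof -
  let ?it = "iterK K zz"
  have itnn: "?it k y \<ge> 0" for k y
    by (induction k arbitrary: y) (auto intro!: sum_nonneg mult_nonneg_nonneg nn)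
  have itsum: "(\<Sum>y\<in>UNIV. ?it k y) = 1" for k
  proof (induction k)
    case (Suc k)
    have "(\<Sum>y\<in>UNIV. ?it (Suc k) y) = (\<Sum>x\<in>UNIV. ?it k x * (\<Sum>y\<in>UNIV. K x y))"
      by (simp only: iterK.simps sum_distrib_left) (rule sum.swap)
    then show ?case using Suc by (simp add: rs)
  qed simp
  have e1: "\<epsilon> \<le> 1"
  proof -
    have "K zz zz \<le> (\<Sum>y\<in>UNIV. K zz y)" by (rule member_le_sum) (auto intro: nn)
    then show ?thesis using lb[of zz] rs[of zz] by simp
  qed
  define d where "d k y = ?it (Suc k) y - ?it k y" for k y
  have dsum: "(\<Sum>y\<in>UNIV. d k y) = 0" for k
    unfolding d_def by (simp add: sum_subtractf itsum del: iterK.simps)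
  have dstep: "d (Suc k) y = (\<Sum>x\<in>UNIV. d k x * K x y)" for k y
  proof -
    have "(\<Sum>x\<in>UNIV. d k x * K x y) = (\<Sum>x\<in>UNIV. ?it (Suc k) x * K x y) - (\<Sum>x\<in>UNIV. ?it k x * K x y)"
      unfolding d_def by (simp add: sum_subtractf left_diff_distrib del: iterK.simps)
    also have "\<dots> = d (Suc k) y" unfolding d_def by (simp only: iterK.simps(2))
    finally show ?thesis by simp
  qed
  have dnorm: "(\<Sum>y\<in>UNIV. \<bar>d k y\<bar>) \<le> 2 * (1 - \<epsilon>) ^ k" for k
  proof (induction k)
    case 0
    have "(\<Sum>y\<in>UNIV. \<bar>d 0 y\<bar>) \<le> (\<Sum>y\<in>UNIV. ?it (Suc 0) y + ?it 0 y)"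
    proof (rule sum_mono)
      fix y
      have "0 \<le> ?it (Suc 0) y" "0 \<le> ?it 0 y" by (rule itnn)+
      then show "\<bar>d 0 y\<bar> \<le> ?it (Suc 0) y + ?it 0 y" unfolding d_def by linarith
    qed
    also have "\<dots> = 2" by (simp only: sum.distrib itsum)
    finally show ?case by simp
  next
    case (Suc k)
    have "(\<Sum>y\<in>UNIV. \<bar>d (Suc k) y\<bar>) \<le> (1 - \<epsilon>) * (\<Sum>y\<in>UNIV. \<bar>d k y\<bar>)"
      unfolding dstep by (rule contraction[OF nn lb rs dsum])
    also have "\<dots> \<le> (1 - \<epsilon>) * (2 * (1 - \<epsilon>) ^ k)"
      using Suc e1 by (intro mult_left_mono) auto
    finally show ?case by simp
  qed
  have dabs: "\<bar>d k y\<bar> \<le> 2 * (1 - \<epsilon>) ^ k" for k y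
  proof -
    have "\<bar>d k y\<bar> \<le> (\<Sum>y\<in>UNIV. \<bar>d k y\<bar>)" by (rule member_le_sum) auto
    then show ?thesis using dnorm[of k] by simp
  qed
  have conv: "convergent (\<lambda>k. ?it k y)" for y
  proof -
    have sm: "summable (\<lambda>k. d k y)"
    proof (rule summable_comparison_test)
      show "\<exists>N. \<forall>n\<ge>N. norm (d n y) \<le> 2 * (1 - \<epsilon>) ^ n" using dabs by auto
      show "summable (\<lambda>n. 2 * (1 - \<epsilon>) ^ n)"
        using ep e1 by (intro summable_mult summable_geometric) auto
    qed
    have tel: "?it k y = ?it 0 y + (\<Sum>j<k. d j y)" for k
      unfolding d_def by (induction k) (simp_all del: iterK.simps)
    have "(\<lambda>k. ?it 0 y + (\<Sum>j<k. d j y)) \<longlonglongrightarrow> ?it 0 y + suminf (\<lambda>k. d k y)"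
      by (intro tendsto_add tendsto_const summable_LIMSEQ sm)
    then show ?thesis unfolding tel[symmetric] by (rule convergentI)
  qed
  define \<pi> where "\<pi> y = lim (\<lambda>k. ?it k y)" for y
  have lim: "(\<lambda>k. ?it k y) \<longlonglongrightarrow> \<pi> y" for y
    unfolding \<pi>_def using conv convergent_LIMSEQ_iff by blast
  have "\<pi> x \<ge> 0" for x
    by (rule LIMSEQ_le_const[OF lim]) (use itnn in auto)
  moreover have "(\<Sum>x\<in>UNIV. \<pi> x) = 1"
  proof -
    have "(\<lambda>k. \<Sum>x\<in>UNIV. ?it k x) \<longlonglongrightarrow> (\<Sum>x\<in>UNIV. \<pi> x)" by (intro tendsto_sum lim)
    then show ?thesis using itsum by (simp add: LIMSEQ_const_iff)
  qed
  moreover have "(\<Sum>x\<in>UNIV. \<pi> x * K x y) = \<pi> y" for y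
  proof -
    have "(\<lambda>k. ?it (Suc k) y) \<longlonglongrightarrow> (\<Sum>x\<in>UNIV. \<pi> x * K x y)"
      by (simp only: iterK.simps) (intro tendsto_sum tendsto_mult lim tendsto_const)
    moreover have "(\<lambda>k. ?it (Suc k) y) \<longlonglongrightarrow> \<pi> y" using lim by (rule LIMSEQ_Suc)
    ultimately show ?thesis by (rule LIMSEQ_unique)
  qed
  ultimately show ?thesis by blast
qed


lemma stat_transn: assumes "stationary p u \<nu> \<pi>"
  shows "(\<Sum>x\<in>UNIV. \<pi> x * transn p u \<nu> t x y) = \<pi> y"
proof (induction t arbitrary: y)
  case 0
  then show ?case by simp
next
  case (Suc t)
  have "(\<Sum>x\<in>UNIV. \<pi> x * transn p u \<nu> (Suc t) x y) = (\<Sum>z\<in>UNIV. (\<Sum>x\<in>UNIV. \<pi> x * transn p u \<nu> t x z) * trans p u \<nu> z y)"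
    by (simp add: sum_distrib_left sum_distrib_right mult.assoc) (rule sum.swap)
  also have "\<dots> = \<pi> y" using Suc assms by (simp add: stationary_def)
  finally show ?case .
qed

context fixsetup
begin

definition "epsu u = (cmin * (u * (1 - \<nu>)) ^ CARD('g)) ^ mm"

lemma epsu_pos: "0 < u \<Longrightarrow> epsu u > 0"
  unfolding epsu_def using cmin(1) nu1 by simp

lemma K_unique:
  assumes u: "0 < u" "u \<le> 1"
    and s1: "(\<Sum>x\<in>UNIV. \<pi>1 x) = 1" "\<And>y. (\<Sum>x\<in>UNIV. \<pi>1 x * transn p u \<nu> mm x y) = \<pi>1 y"
    and s2: "(\<Sum>x\<in>UNIV. \<pi>2 x) = 1" "\<And>y. (\<Sum>x\<in>UNIV. \<pi>2 x * transn p u \<nu> mm x y) = \<pi>2 y"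
  shows "\<pi>1 = \<pi>2"
proof -
  define w where "w x = \<pi>1 x - \<pi>2 x" for x
  have w0: "(\<Sum>x\<in>UNIV. w x) = 0" unfolding w_def using s1 s2 by (simp add: sum_subtractf)
  have wK: "(\<Sum>x\<in>UNIV. w x * transn p u \<nu> mm x y) = w y" for y
    unfolding w_def using s1(2)[of y] s2(2)[of y] by (simp add: left_diff_distrib sum_subtractf)
  have "(\<Sum>y\<in>UNIV. \<bar>\<Sum>x\<in>UNIV. w x * transn p u \<nu> mm x y\<bar>) \<le> (1 - epsu u) * (\<Sum>x\<in>UNIV. \<bar>w x\<bar>)"
    by (rule contraction[OF _ _ transn_sum[OF rep] w0])
       (use transn_nonneg[OF rep] u nu0 nu1 doeblin[OF u] in \<open>auto simp: epsu_def\<close>)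
  then have "(\<Sum>x\<in>UNIV. \<bar>w x\<bar>) \<le> (1 - epsu u) * (\<Sum>x\<in>UNIV. \<bar>w x\<bar>)" by (simp add: wK)
  then have "epsu u * (\<Sum>x\<in>UNIV. \<bar>w x\<bar>) \<le> 0" by (simp add: algebra_simps)
  then have "(\<Sum>x\<in>UNIV. \<bar>w x\<bar>) \<le> 0" using epsu_pos[OF u(1)]
    by (simp add: mult_le_0_iff)
  then have "\<forall>x\<in>UNIV. \<bar>w x\<bar> = 0" by (subst sum_nonneg_eq_0_iff[symmetric]) (auto intro: antisym)
  then show ?thesis unfolding w_def by (auto simp: fun_eq_iff)
qed

lemma stationary_exists_unique:
  assumes u: "0 < u" "u \<le> 1"
  shows "\<exists>!\<pi>. stationary p u \<nu> \<pi>"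
proof -
  obtain \<pi> where \<pi>: "\<forall>x. \<pi> x \<ge> 0" "(\<Sum>x\<in>UNIV. \<pi> x) = 1"
    "\<forall>y. (\<Sum>x\<in>UNIV. \<pi> x * transn p u \<nu> mm x y) = \<pi> y"
    using kernel_fixpoint[where K="transn p u \<nu> mm" and zz="{}" and \<epsilon>="epsu u"]
      transn_nonneg[OF rep] u nu0 nu1 doeblin[OF u] epsu_pos[OF u(1)] transn_sum[OF rep]
    by (auto simp: epsu_def)
  define \<pi>' where "\<pi>' y = (\<Sum>x\<in>UNIV. \<pi> x * trans p u \<nu> x y)" for y
  have K': "(\<Sum>x\<in>UNIV. \<pi>' x * transn p u \<nu> mm x y) = \<pi>' y" for y
  proof -
    have "(\<Sum>x\<in>UNIV. \<pi>' x * transn p u \<nu> mm x y) = (\<Sum>z\<in>UNIV. \<pi> z * (\<Sum>x\<in>UNIV. trans p u \<nu> z x * transn p u \<nu> mm x y))"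
      unfolding \<pi>'_def by (simp add: sum_distrib_left sum_distrib_right mult.assoc) (rule sum.swap)
    also have "\<dots> = (\<Sum>z\<in>UNIV. \<pi> z * transn p u \<nu> (Suc mm) z y)"
      by (simp only: transn_Suc_left)
    also have "\<dots> = (\<Sum>x\<in>UNIV. (\<Sum>z\<in>UNIV. \<pi> z * transn p u \<nu> mm z x) * trans p u \<nu> x y)"
      by (simp only: transn.simps sum_distrib_left sum_distrib_right mult.assoc) (rule sum.swap)
    also have "\<dots> = \<pi>' y" unfolding \<pi>'_def using \<pi>(3) by simp
    finally show ?thesis .
  qed
  have s': "(\<Sum>x\<in>UNIV. \<pi>' x) = 1"
  proof -
    have "(\<Sum>x\<in>UNIV. \<pi>' x) = (\<Sum>z\<in>UNIV. \<pi> z * (\<Sum>x\<in>UNIV. trans p u \<nu> z x))"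
      unfolding \<pi>'_def by (simp add: sum_distrib_left) (rule sum.swap)
    then show ?thesis using \<pi>(2) trans_sum[OF rep] by simp
  qed
  have "\<pi>' = \<pi>" by (rule K_unique[OF u s' K' \<pi>(2)]) (use \<pi>(3) in auto)
  then have st: "stationary p u \<nu> \<pi>" unfolding stationary_def using \<pi> \<pi>'_def by (auto simp: fun_eq_iff)
  show ?thesis
  proof (rule ex1I[where P="stationary p u \<nu>" and a=\<pi>, OF st])
    fix \<pi>2 assume st2: "stationary p u \<nu> \<pi>2"
    show "\<pi>2 = \<pi>"
      by (rule K_unique[OF u]) (use st st2 stat_transn[OF st2] stat_transn[OF st] in \<open>auto simp: stationary_def\<close>)
  qed
qed

lemma pi_MSS_stat: assumes "0 < u" "u \<le> 1"
  shows "stationary p u \<nu> (pi_MSS p u \<nu>)"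
  unfolding pi_MSS_def using theI'[OF stationary_exists_unique[OF assms]] .

end


lemma at_to_right: "(f \<longlongrightarrow> l) (at (x::real)) \<Longrightarrow> (f \<longlongrightarrow> l) (at_right x)"
  by (rule tendsto_mono[OF at_le[OF subset_UNIV]])

lemma lin_deriv: "((\<lambda>u::real. a + u * b) has_derivative (\<lambda>h. h * b)) (at x)"
proof -
  have "((\<lambda>u::real. a + u * b) has_real_derivative b) (at x)"
    by (auto intro!: derivative_eq_intros)
  moreover have "(\<lambda>h. h * b) = (*) b" by (auto simp: fun_eq_iff mult.commute)
  ultimately show ?thesis unfolding has_field_derivative_def by simp
qed

lemma prod_lin_deriv:
  fixes A B :: "'g::finite \<Rightarrow> real"
  shows "((\<lambda>u. \<Prod>g\<in>UNIV. A g + u * B g) has_real_derivative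
           (\<Sum>g\<in>UNIV. B g * (\<Prod>j\<in>UNIV - {g}. A j + x * B j))) (at x)"
proof -
  have "((\<lambda>u. \<Prod>g\<in>UNIV. A g + u * B g) has_derivative
        (\<lambda>y. \<Sum>g\<in>UNIV. y * B g * (\<Prod>j\<in>UNIV - {g}. A j + x * B j))) (at x)"
    by (rule has_derivative_prod) (rule lin_deriv)
  moreover have "(\<lambda>y. \<Sum>g\<in>UNIV. y * B g * (\<Prod>j\<in>UNIV - {g}. A j + x * B j))
      = (*) (\<Sum>g\<in>UNIV. B g * (\<Prod>j\<in>UNIV - {g}. A j + x * B j))"
    by (simp add: fun_eq_iff sum_distrib_left mult_ac)
  ultimately show ?thesis unfolding has_field_derivative_def by simp
qed

lemma fac_lin: "fac u \<nu> x y e g = fac 0 \<nu> x y e g + u * (fac 1 \<nu> x y e g - fac 0 \<nu> x y e g)"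
  unfolding fac_def by (auto simp: algebra_simps)

definition "T1 p \<nu> x y = (\<Sum>e\<in>events. p x e * (\<Sum>g\<in>UNIV. (fac 1 \<nu> x y e g - fac 0 \<nu> x y e g)
      * (\<Prod>j\<in>UNIV - {g}. fac 0 \<nu> x y e j)))"

lemma trans_deriv: "((\<lambda>u. trans p u \<nu> x y) has_real_derivative T1 p \<nu> x y) (at 0)"
proof -
  have eq: "(\<lambda>u. trans p u \<nu> x y) = (\<lambda>u. \<Sum>e\<in>events. p x e * (\<Prod>g\<in>UNIV. fac 0 \<nu> x y e g + u * (fac 1 \<nu> x y e g - fac 0 \<nu> x y e g)))"
  proof -
    have "(\<Prod>g\<in>UNIV. fac u \<nu> x y e g) = (\<Prod>g\<in>UNIV. fac 0 \<nu> x y e g + u * (fac 1 \<nu> x y e g - fac 0 \<nu> x y e g))" for u e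
      by (rule prod.cong[OF refl], rule fac_lin)
    then show ?thesis unfolding trans_fac by simp
  qed
  show ?thesis unfolding eq T1_def
    by (intro DERIV_sum DERIV_cmult) (rule prod_lin_deriv[where x=0, simplified])
qed

lemma transn_deriv: "\<exists>D. ((\<lambda>u. transn p u \<nu> t x y) has_real_derivative D) (at 0)"
proof (induction t arbitrary: y)
  case 0
  then show ?case by (auto intro: DERIV_const)
next
  case (Suc t)
  then obtain D where D: "\<And>z. ((\<lambda>u. transn p u \<nu> t x z) has_real_derivative D z) (at 0)" by metis
  have "((\<lambda>u. \<Sum>z\<in>UNIV. transn p u \<nu> t x z * trans p u \<nu> z y) has_real_derivative
     (\<Sum>z\<in>UNIV. D z * trans p 0 \<nu> z y + T1 p \<nu> z y * transn p 0 \<nu> t x z)) (at 0)"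
    by (rule DERIV_sum) (rule DERIV_mult[OF D trans_deriv])
  then show ?case unfolding transn.simps by blast
qed

lemma transn_cont: "((\<lambda>u. transn p u \<nu> t x y) \<longlongrightarrow> transn p 0 \<nu> t x y) (at_right 0)"
proof -
  obtain D where "((\<lambda>u. transn p u \<nu> t x y) has_real_derivative D) (at 0)" using transn_deriv by blast
  then have "isCont (\<lambda>u. transn p u \<nu> t x y) 0" by (rule DERIV_isCont)
  then show ?thesis unfolding isCont_def by (rule at_to_right)
qed

lemma trans_cont: "((\<lambda>u. trans p u \<nu> x y) \<longlongrightarrow> trans p 0 \<nu> x y) (at_right 0)"
  using transn_cont[of p \<nu> "Suc 0" x y] by (simp add: transn_1)

lemma deriv_quot: assumes "(f has_real_derivative D) (at 0)" "f 0 = 0"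
  shows "((\<lambda>u. f u / u) \<longlongrightarrow> D) (at_right 0)"
  using assms(1) unfolding DERIV_def using assms(2) by (simp add: at_to_right)

lemma transn_quot: assumes "replacement_rule p" "y \<noteq> {}"
  shows "\<exists>D. ((\<lambda>u. transn p u \<nu> t {} y / u) \<longlongrightarrow> D) (at_right 0)"
proof -
  obtain D where "((\<lambda>u. transn p u \<nu> t {} y) has_real_derivative D) (at 0)" using transn_deriv by blast
  then have "((\<lambda>u. transn p u \<nu> t {} y / u) \<longlongrightarrow> D) (at_right 0)"
    by (rule deriv_quot) (simp add: transn0_empty[OF assms(1)] assms(2))
  then show ?thesis by blast
qed

lemma transn_quot_UNIV: assumes "replacement_rule p" "y \<noteq> UNIV"
  shows "\<exists>D. ((\<lambda>u. transn p u \<nu> t UNIV y / u) \<longlongrightarrow> D) (at_right 0)"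
proof -
  obtain D where "((\<lambda>u. transn p u \<nu> t UNIV y) has_real_derivative D) (at 0)" using transn_deriv by blast
  then have "((\<lambda>u. transn p u \<nu> t UNIV y / u) \<longlongrightarrow> D) (at_right 0)"
    by (rule deriv_quot) (simp add: transn0_UNIV[OF assms(1)] assms(2))
  then show ?thesis by blast
qed

lemma prod_indic2: fixes P :: "'g::finite \<Rightarrow> bool"
  shows "(\<Prod>j\<in>S. if P j then 1 else 0) = (if \<forall>j\<in>S. P j then 1 else (0::real))"
proof (cases "\<forall>j\<in>S. P j")
  case True then show ?thesis by simp
next
  case False then obtain j where "j \<in> S" "\<not> P j" by blast
  then have "(\<Prod>j\<in>S. if P j then 1 else (0::real)) = 0" by (subst prod_zero_iff) auto
  then show ?thesis using False by simp
qed

lemma T1_empty: assumes "y \<noteq> {}"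
  shows "T1 p \<nu> {} y = \<nu> * (\<Sum>g\<in>UNIV. if y = {g} then dd p g {} else 0)"
proof -
  have A: "fac 0 \<nu> {} y e j = (if j \<notin> y then 1 else 0)" for e j by (simp add: fac_def)
  have P: "(\<Prod>j\<in>UNIV - {g}. fac 0 \<nu> {} y e j) = (if y = {g} then 1 else 0)" for e g
    unfolding A prod_indic2 using assms by auto
  have "T1 p \<nu> {} y = (\<Sum>e\<in>events. p {} e * (\<Sum>g\<in>UNIV. if y = {g} \<and> g \<in> fst e then \<nu> else 0))"
    unfolding T1_def P
    by (intro sum.cong refl arg_cong2[where f="(*)"]) (auto simp: fac_def)
  also have "\<dots> = (\<Sum>g\<in>UNIV. \<Sum>e\<in>events. if y = {g} \<and> g \<in> fst e then \<nu> * p {} e else 0)"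
    by (subst sum.swap) (auto simp: sum_distrib_left intro!: sum.cong)
  also have "\<dots> = \<nu> * (\<Sum>g\<in>UNIV. if y = {g} then dd p g {} else 0)"
    unfolding dd_alt by (auto simp: sum_distrib_left intro!: sum.cong)
  finally show ?thesis .
qed

lemma T1_UNIV: assumes "y \<noteq> UNIV"
  shows "T1 p \<nu> UNIV y = (1 - \<nu>) * (\<Sum>g\<in>UNIV. if y = UNIV - {g} then dd p g UNIV else 0)"
proof -
  have A: "fac 0 \<nu> UNIV y e j = (if j \<in> y then 1 else 0)" for e j by (simp add: fac_def)
  have P: "(\<Prod>j\<in>UNIV - {g}. fac 0 \<nu> UNIV y e j) = (if y = UNIV - {g} then 1 else 0)" for e g
    unfolding A prod_indic2 using assms by auto
  have "T1 p \<nu> UNIV y = (\<Sum>e\<in>events. p UNIV e * (\<Sum>g\<in>UNIV. if y = UNIV - {g} \<and> g \<in> fst e then 1 - \<nu> else 0))"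
    unfolding T1_def P
    by (intro sum.cong refl arg_cong2[where f="(*)"]) (auto simp: fac_def)
  also have "\<dots> = (\<Sum>g\<in>UNIV. \<Sum>e\<in>events. if y = UNIV - {g} \<and> g \<in> fst e then (1 - \<nu>) * p UNIV e else 0)"
    by (subst sum.swap) (auto simp: sum_distrib_left intro!: sum.cong)
  also have "\<dots> = (1 - \<nu>) * (\<Sum>g\<in>UNIV. if y = UNIV - {g} then dd p g UNIV else 0)"
    unfolding dd_alt by (auto simp: sum_distrib_left intro!: sum.cong)
  finally show ?thesis .
qed


lemma Ga_lim: assumes rep: "replacement_rule p"
  shows "((\<lambda>u. (\<Sum>y\<in>UNIV. (trans p u \<nu> {} y - trans p 0 \<nu> {} y) * h y) / u) \<longlongrightarrow>
     \<nu> * (\<Sum>g\<in>UNIV. dd p g {} * (h {g} - h {}))) (at_right 0)"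
proof -
  have eq: "(\<Sum>y\<in>UNIV. (trans p u \<nu> {} y - trans p 0 \<nu> {} y) * h y) / u
      = (\<Sum>y\<in>UNIV. trans p u \<nu> {} y / u * (h y - h {}))" for u
  proof -
    have "(\<Sum>y\<in>UNIV. (trans p u \<nu> {} y - trans p 0 \<nu> {} y) * h y)
       = (\<Sum>y\<in>UNIV. (trans p u \<nu> {} y - trans p 0 \<nu> {} y) * (h y - h {}) + (trans p u \<nu> {} y - trans p 0 \<nu> {} y) * h {})"
      by (rule sum.cong) (simp_all add: algebra_simps)
    also have "\<dots> = (\<Sum>y\<in>UNIV. (trans p u \<nu> {} y - trans p 0 \<nu> {} y) * (h y - h {})) + 
         (\<Sum>y\<in>UNIV. (trans p u \<nu> {} y - trans p 0 \<nu> {} y)) * h {}"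
      by (simp only: sum.distrib sum_distrib_right)
    also have "(\<Sum>y\<in>UNIV. (trans p u \<nu> {} y - trans p 0 \<nu> {} y)) = 0"
      by (simp add: sum_subtractf trans_sum[OF rep])
    also have "(\<Sum>y\<in>UNIV. (trans p u \<nu> {} y - trans p 0 \<nu> {} y) * (h y - h {}))
        = (\<Sum>y\<in>UNIV. trans p u \<nu> {} y * (h y - h {}))"
      by (rule sum.cong) (auto simp: trans0_empty[OF rep])
    finally show ?thesis by (simp add: sum_divide_distrib)
  qed
  have lim: "((\<lambda>u. trans p u \<nu> {} y / u * (h y - h {})) \<longlongrightarrow> T1 p \<nu> {} y * (h y - h {})) (at_right 0)" for y
  proof (cases "y = {}")
    case True then show ?thesis by simp
  next
    case False
    have "((\<lambda>u. trans p u \<nu> {} y / u) \<longlongrightarrow> T1 p \<nu> {} y) (at_right 0)"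
      by (rule deriv_quot[OF trans_deriv]) (simp add: trans0_empty[OF rep] False)
    then show ?thesis by (rule tendsto_mult_right)
  qed
  have val: "(\<Sum>y\<in>UNIV. T1 p \<nu> {} y * (h y - h {})) = \<nu> * (\<Sum>g\<in>UNIV. dd p g {} * (h {g} - h {}))"
  proof -
    have "T1 p \<nu> {} y * (h y - h {}) = \<nu> * (\<Sum>g\<in>UNIV. if y = {g} then dd p g {} * (h {g} - h {}) else 0)" for y
    proof (cases "y = {}")
      case True then show ?thesis by simp
    next
      case False then show ?thesis unfolding T1_empty[OF False]
        by (simp add: sum_distrib_right if_distrib[of "\<lambda>z. z * _"] cong: if_cong)
    qed
    then have "(\<Sum>y\<in>UNIV. T1 p \<nu> {} y * (h y - h {})) = (\<Sum>y\<in>UNIV. \<nu> * (\<Sum>g\<in>UNIV. if y = {g} then dd p g {} * (h {g} - h {}) else 0))"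
      by (intro sum.cong refl)
    also have "\<dots> = \<nu> * (\<Sum>y\<in>UNIV. \<Sum>g\<in>UNIV. if y = {g} then dd p g {} * (h {g} - h {}) else 0)"
      by (rule sum_distrib_left[symmetric])
    also have "\<nu> * (\<Sum>y\<in>UNIV. \<Sum>g\<in>UNIV. if y = {g} then dd p g {} * (h {g} - h {}) else 0) = \<nu> * (\<Sum>g\<in>UNIV. \<Sum>y\<in>UNIV. if y = {g} then dd p g {} * (h {g} - h {}) else 0)"
      by (rule arg_cong[where f="(*) \<nu>"], rule sum.swap)
    also have "\<dots> = \<nu> * (\<Sum>g\<in>UNIV. dd p g {} * (h {g} - h {}))" by simp
    finally show ?thesis .
  qed
  show ?thesis unfolding eq val[symmetric] by (intro tendsto_sum lim)
qed

lemma GA_lim: assumes rep: "replacement_rule p"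
  shows "((\<lambda>u. (\<Sum>y\<in>UNIV. (trans p u \<nu> UNIV y - trans p 0 \<nu> UNIV y) * h y) / u) \<longlongrightarrow>
     (1 - \<nu>) * (\<Sum>g\<in>UNIV. dd p g UNIV * (h (UNIV - {g}) - h UNIV))) (at_right 0)"
proof -
  have eq: "(\<Sum>y\<in>UNIV. (trans p u \<nu> UNIV y - trans p 0 \<nu> UNIV y) * h y) / u
      = (\<Sum>y\<in>UNIV. trans p u \<nu> UNIV y / u * (h y - h UNIV))" for u
  proof -
    have "(\<Sum>y\<in>UNIV. (trans p u \<nu> UNIV y - trans p 0 \<nu> UNIV y) * h y)
       = (\<Sum>y\<in>UNIV. (trans p u \<nu> UNIV y - trans p 0 \<nu> UNIV y) * (h y - h UNIV) + (trans p u \<nu> UNIV y - trans p 0 \<nu> UNIV y) * h UNIV)"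
      by (rule sum.cong) (simp_all add: algebra_simps)
    also have "\<dots> = (\<Sum>y\<in>UNIV. (trans p u \<nu> UNIV y - trans p 0 \<nu> UNIV y) * (h y - h UNIV)) + 
         (\<Sum>y\<in>UNIV. (trans p u \<nu> UNIV y - trans p 0 \<nu> UNIV y)) * h UNIV"
      by (simp only: sum.distrib sum_distrib_right)
    also have "(\<Sum>y\<in>UNIV. (trans p u \<nu> UNIV y - trans p 0 \<nu> UNIV y)) = 0"
      by (simp add: sum_subtractf trans_sum[OF rep])
    also have "(\<Sum>y\<in>UNIV. (trans p u \<nu> UNIV y - trans p 0 \<nu> UNIV y) * (h y - h UNIV))
        = (\<Sum>y\<in>UNIV. trans p u \<nu> UNIV y * (h y - h UNIV))"
      by (rule sum.cong) (auto simp: trans0_UNIV[OF rep])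
    finally show ?thesis by (simp add: sum_divide_distrib)
  qed
  have lim: "((\<lambda>u. trans p u \<nu> UNIV y / u * (h y - h UNIV)) \<longlongrightarrow> T1 p \<nu> UNIV y * (h y - h UNIV)) (at_right 0)" for y
  proof (cases "y = UNIV")
    case True then show ?thesis by simp
  next
    case False
    have "((\<lambda>u. trans p u \<nu> UNIV y / u) \<longlongrightarrow> T1 p \<nu> UNIV y) (at_right 0)"
      by (rule deriv_quot[OF trans_deriv]) (simp add: trans0_UNIV[OF rep] False)
    then show ?thesis by (rule tendsto_mult_right)
  qed
  have val: "(\<Sum>y\<in>UNIV. T1 p \<nu> UNIV y * (h y - h UNIV)) = (1 - \<nu>) * (\<Sum>g\<in>UNIV. dd p g UNIV * (h (UNIV - {g}) - h UNIV))"
  proof -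
    have "T1 p \<nu> UNIV y * (h y - h UNIV) = (1 - \<nu>) * (\<Sum>g\<in>UNIV. if y = UNIV - {g} then dd p g UNIV * (h (UNIV - {g}) - h UNIV) else 0)" for y
    proof (cases "y = UNIV")
      case True
      have "(\<Sum>g\<in>UNIV. if y = UNIV - {g} then dd p g UNIV * (h (UNIV - {g}) - h UNIV) else 0) = 0"
        by (rule sum.neutral) (use True in auto)
      then show ?thesis using True by simp
    next
      case False then show ?thesis unfolding T1_UNIV[OF False]
        by (simp add: sum_distrib_right if_distrib[of "\<lambda>z. z * _"] cong: if_cong)
    qed
    then have "(\<Sum>y\<in>UNIV. T1 p \<nu> UNIV y * (h y - h UNIV)) = (\<Sum>y\<in>UNIV. (1 - \<nu>) * (\<Sum>g\<in>UNIV. if y = UNIV - {g} then dd p g UNIV * (h (UNIV - {g}) - h UNIV) else 0))"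
      by (intro sum.cong refl)
    also have "\<dots> = (1 - \<nu>) * (\<Sum>y\<in>UNIV. \<Sum>g\<in>UNIV. if y = UNIV - {g} then dd p g UNIV * (h (UNIV - {g}) - h UNIV) else 0)"
      by (rule sum_distrib_left[symmetric])
    also have "(1 - \<nu>) * (\<Sum>y\<in>UNIV. \<Sum>g\<in>UNIV. if y = UNIV - {g} then dd p g UNIV * (h (UNIV - {g}) - h UNIV) else 0) = (1 - \<nu>) * (\<Sum>g\<in>UNIV. \<Sum>y\<in>UNIV. if y = UNIV - {g} then dd p g UNIV * (h (UNIV - {g}) - h UNIV) else 0)"
      by (rule arg_cong[where f="(*) (1 - \<nu>)"], rule sum.swap)
    also have "\<dots> = (1 - \<nu>) * (\<Sum>g\<in>UNIV. dd p g UNIV * (h (UNIV - {g}) - h UNIV))" by simp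
    finally show ?thesis .
  qed
  show ?thesis unfolding eq val[symmetric] by (intro tendsto_sum lim)
qed

context fixsetup
begin

definition "hA x = lim (\<lambda>t. transn p 0 \<nu> t x UNIV)"
definition "ha x = lim (\<lambda>t. transn p 0 \<nu> t x {})"

lemma nn0: "transn p 0 \<nu> t x y \<ge> 0" using transn_nonneg[OF rep] nu0 nu1 by simp
lemma le10: "transn p 0 \<nu> t x y \<le> 1" using transn_le1[OF rep] nu0 nu1 by simp

lemma hA_lim: "(\<lambda>t. transn p 0 \<nu> t x UNIV) \<longlonglongrightarrow> hA x" and hA_ge: "transn p 0 \<nu> t x UNIV \<le> hA x"
proof -
  have inc: "incseq (\<lambda>t. transn p 0 \<nu> t x UNIV)"
  proof (rule incseq_SucI)
    fix t
    have "transn p 0 \<nu> t x UNIV = transn p 0 \<nu> t x UNIV * trans p 0 \<nu> UNIV UNIV"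
      by (simp add: trans0_UNIV[OF rep])
    also have "\<dots> \<le> transn p 0 \<nu> (Suc t) x UNIV" unfolding transn.simps
      by (rule member_le_sum[where f="\<lambda>z. transn p 0 \<nu> t x z * trans p 0 \<nu> z UNIV"])
         (auto intro!: mult_nonneg_nonneg nn0 trans_nonneg[OF rep] simp: less_imp_le[OF nu0] less_imp_le[OF nu1])
    finally show "transn p 0 \<nu> t x UNIV \<le> transn p 0 \<nu> (Suc t) x UNIV" .
  qed
  obtain L where L: "(\<lambda>t. transn p 0 \<nu> t x UNIV) \<longlonglongrightarrow> L" "\<forall>i. transn p 0 \<nu> i x UNIV \<le> L"
    using incseq_convergent[OF inc, of 1] le10 by blast
  then have "hA x = L" unfolding hA_def by (simp add: limI)
  then show "(\<lambda>t. transn p 0 \<nu> t x UNIV) \<longlonglongrightarrow> hA x" "transn p 0 \<nu> t x UNIV \<le> hA x" using L by auto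
qed

lemma ha_lim: "(\<lambda>t. transn p 0 \<nu> t x {}) \<longlonglongrightarrow> ha x" and ha_ge: "transn p 0 \<nu> t x {} \<le> ha x"
proof -
  have inc: "incseq (\<lambda>t. transn p 0 \<nu> t x {})"
  proof (rule incseq_SucI)
    fix t
    have "transn p 0 \<nu> t x {} = transn p 0 \<nu> t x {} * trans p 0 \<nu> {} {}"
      by (simp add: trans0_empty[OF rep])
    also have "\<dots> \<le> transn p 0 \<nu> (Suc t) x {}" unfolding transn.simps
      by (rule member_le_sum[where f="\<lambda>z. transn p 0 \<nu> t x z * trans p 0 \<nu> z {}"])
         (auto intro!: mult_nonneg_nonneg nn0 trans_nonneg[OF rep] simp: less_imp_le[OF nu0] less_imp_le[OF nu1])
    finally show "transn p 0 \<nu> t x {} \<le> transn p 0 \<nu> (Suc t) x {}" .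
  qed
  obtain L where L: "(\<lambda>t. transn p 0 \<nu> t x {}) \<longlonglongrightarrow> L" "\<forall>i. transn p 0 \<nu> i x {} \<le> L"
    using incseq_convergent[OF inc, of 1] le10 by blast
  then have "ha x = L" unfolding ha_def by (simp add: limI)
  then show "(\<lambda>t. transn p 0 \<nu> t x {}) \<longlonglongrightarrow> ha x" "transn p 0 \<nu> t x {} \<le> ha x" using L by auto
qed

lemma hA_harm: "(\<Sum>y\<in>UNIV. trans p 0 \<nu> x y * hA y) = hA x"
proof -
  have "(\<lambda>t. transn p 0 \<nu> (Suc t) x UNIV) \<longlonglongrightarrow> (\<Sum>y\<in>UNIV. trans p 0 \<nu> x y * hA y)"
    unfolding transn_Suc_left by (intro tendsto_sum tendsto_mult tendsto_const hA_lim)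
  moreover have "(\<lambda>t. transn p 0 \<nu> (Suc t) x UNIV) \<longlonglongrightarrow> hA x" by (rule LIMSEQ_Suc[OF hA_lim])
  ultimately show ?thesis by (rule LIMSEQ_unique)
qed

lemma hA_empty: "hA {} = 0"
proof -
  have "(\<lambda>t. transn p 0 \<nu> t {} UNIV) \<longlonglongrightarrow> 0" by (simp add: transn0_empty[OF rep])
  then show ?thesis using hA_lim LIMSEQ_unique by blast
qed

lemma hA_UNIV: "hA UNIV = 1"
proof -
  have "(\<lambda>t. transn p 0 \<nu> t UNIV UNIV) \<longlonglongrightarrow> 1" by (simp add: transn0_UNIV[OF rep])
  then show ?thesis using hA_lim LIMSEQ_unique by blast
qed

definition "KTR0 x = (\<Sum>y\<in>TR. transn p 0 \<nu> mm x y)"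

lemma TR_decay: "(\<Sum>y\<in>TR. transn p 0 \<nu> (k * mm) x y) \<le> (1 - del0) ^ k"
proof (induction k)
  case 0
  have "(\<Sum>y\<in>TR. transn p 0 \<nu> 0 x y) \<le> 1"
  proof -
    have "(\<Sum>y\<in>TR. transn p 0 \<nu> 0 x y) \<le> (\<Sum>y\<in>UNIV. transn p 0 \<nu> 0 x y)"
      by (rule sum_mono2) (auto intro: nn0)
    then show ?thesis using transn_sum[OF rep] by simp
  qed
  then show ?case by simp
next
  case (Suc k)
  have "(\<Sum>y\<in>TR. transn p 0 \<nu> (Suc k * mm) x y) = (\<Sum>z\<in>UNIV. transn p 0 \<nu> (k * mm) x z * KTR0 z)"
  proof -
    have "Suc k * mm = k * mm + mm" by simp
    then show ?thesis unfolding KTR0_def by (simp only: transn_add sum_distrib_left) (rule sum.swap)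
  qed
  also have "\<dots> \<le> (\<Sum>z\<in>UNIV. transn p 0 \<nu> (k * mm) x z * (if z \<in> TR then 1 - del0 else 0))"
  proof (rule sum_mono, rule mult_left_mono[OF _ nn0])
    fix z :: "'g set"
    show "KTR0 z \<le> (if z \<in> TR then 1 - del0 else 0)"
    proof (cases "z \<in> TR")
      case True then show ?thesis using TR_bound[of z] by (simp add: KTR0_def)
    next
      case False
      then have "z = {} \<or> z = UNIV" by (auto simp: TR_def)
      then show ?thesis using False
        by (auto simp: KTR0_def transn0_empty[OF rep] transn0_UNIV[OF rep] TR_def)
    qed
  qed
  also have "\<dots> = (1 - del0) * (\<Sum>z\<in>TR. transn p 0 \<nu> (k * mm) x z)"
  proof -
    have "(\<Sum>z\<in>UNIV. transn p 0 \<nu> (k * mm) x z * (if z \<in> TR then 1 - del0 else 0))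
       = (\<Sum>z\<in>UNIV. if z \<in> TR then (1 - del0) * transn p 0 \<nu> (k * mm) x z else 0)"
      by (rule sum.cong) auto
    also have "\<dots> = (\<Sum>z\<in>UNIV \<inter> TR. (1 - del0) * transn p 0 \<nu> (k * mm) x z)"
      by (rule sum.inter_restrict[symmetric]) simp
    finally show ?thesis by (simp add: sum_distrib_left)
  qed
  also have "\<dots> \<le> (1 - del0) * (1 - del0) ^ k"
    using Suc del0_le1 by (intro mult_left_mono) auto
  finally show ?case by simp
qed

lemma sum_UNIV_split: fixes f :: "('g::finite) set \<Rightarrow> real"
  shows "(\<Sum>x\<in>UNIV. f x) = f {} + f UNIV + (\<Sum>x\<in>TR. f x)"
proof -
  have ne: "{} \<noteq> (UNIV :: 'g set)" by simp
  have "(UNIV :: 'g set set) = insert {} (insert UNIV TR)" by (auto simp: TR_def)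
  then have "(\<Sum>x\<in>UNIV. f x) = (\<Sum>x\<in>insert {} (insert UNIV TR). f x)" by simp
  also have "\<dots> = f {} + (f UNIV + (\<Sum>x\<in>TR. f x))" using ne by (simp add: TR_def)
  finally show ?thesis by simp
qed

lemma hA_ha: "hA x + ha x = 1"
proof -
  let ?f = "\<lambda>t. transn p 0 \<nu> t x {} + transn p 0 \<nu> t x UNIV"
  have f1: "?f t = 1 - (\<Sum>y\<in>TR. transn p 0 \<nu> t x y)" for t
    using transn_sum[OF rep, of 0 \<nu> t x] sum_UNIV_split[of "transn p 0 \<nu> t x"] by simp
  have lim: "?f \<longlonglongrightarrow> ha x + hA x" by (intro tendsto_add ha_lim hA_lim)
  have sm: "strict_mono (\<lambda>k. k * mm)" using mm_pos by (auto simp: strict_mono_def)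
  have "(?f \<circ> (\<lambda>k. k * mm)) \<longlonglongrightarrow> ha x + hA x" by (rule LIMSEQ_subseq_LIMSEQ[OF lim sm])
  moreover have "(?f \<circ> (\<lambda>k. k * mm)) \<longlonglongrightarrow> 1"
  proof (rule real_tendsto_sandwich)
    show "\<forall>\<^sub>F k in sequentially. 1 - (1 - del0) ^ k \<le> (?f \<circ> (\<lambda>k. k * mm)) k"
      using TR_decay[of _ x] f1 by simp
    have "\<forall>\<^sub>F k in sequentially. (?f \<circ> (\<lambda>k. k * mm)) k \<le> 1"
      by (intro always_eventually allI) (simp add: f1 sum_nonneg nn0)
    then show "\<forall>\<^sub>F k in sequentially. (?f \<circ> (\<lambda>k. k * mm)) k \<le> 1" .
    have "(\<lambda>k. (1 - del0) ^ k) \<longlonglongrightarrow> 0" using del0_pos del0_le1 by (intro LIMSEQ_power_zero) auto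
    then show "(\<lambda>k. 1 - (1 - del0) ^ k) \<longlonglongrightarrow> 1" by (auto intro: tendsto_eq_intros)
  qed simp
  ultimately show ?thesis using LIMSEQ_unique by fastforce
qed

definition "alphaA = \<nu> * btot p {} * rho_A p \<nu>"
definition "betaA = (1 - \<nu>) * btot p UNIV * rho_a p \<nu>"

lemma rho_A_alt: "rho_A p \<nu> = (\<Sum>g\<in>UNIV. dd p g {} * hA {g}) / btot p {}"
  unfolding rho_A_def hA_def by (simp add: sum_divide_distrib)

lemma rho_a_alt: "rho_a p \<nu> = (\<Sum>g\<in>UNIV. dd p g UNIV * ha (UNIV - {g})) / btot p UNIV"
  unfolding rho_a_def ha_def by (simp add: sum_divide_distrib)

lemma Ga_hA: "\<nu> * (\<Sum>g\<in>UNIV. dd p g {} * (hA {g} - hA {})) = alphaA"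
  unfolding alphaA_def rho_A_alt hA_empty using btot_pos[of "{}"] by simp

lemma GA_hA: "(1 - \<nu>) * (\<Sum>g\<in>UNIV. dd p g UNIV * (hA (UNIV - {g}) - hA UNIV)) = - betaA"
proof -
  have "hA (UNIV - {g}) - hA UNIV = - ha (UNIV - {g})" for g using hA_ha[of "UNIV - {g}"] hA_UNIV by simp
  then show ?thesis unfolding betaA_def rho_a_alt using btot_pos[of UNIV] by (simp add: sum_negf)
qed

lemma hA_nn: "hA x \<ge> 0" using hA_ge[of 0 x] nn0[of 0 x UNIV] by linarith
lemma ha_nn: "ha x \<ge> 0" using ha_ge[of 0 x] nn0[of 0 x "{}"] by linarith

lemma rho_A_pos: "rho_A p \<nu> > 0"
proof -
  have "hA {g0} \<ge> del0"
    using absorb_bound[of "{g0}"] hA_ge[of mm "{g0}"] unfolding run_fes by simp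
  then have pos: "dd p g0 {} * hA {g0} > 0" using del0_pos dd_g0_pos by simp
  have "dd p g0 {} * hA {g0} \<le> (\<Sum>g\<in>UNIV. dd p g {} * hA {g})"
    by (rule member_le_sum[where f="\<lambda>g. dd p g {} * hA {g}"]) (auto intro!: mult_nonneg_nonneg dd_nonneg hA_nn)
  then show ?thesis unfolding rho_A_alt using pos btot_pos[of "{}"] by simp
qed

lemma rho_a_pos: "rho_a p \<nu> > 0"
proof -
  have "ha (UNIV - {g0}) \<ge> del0"
    using absorb_bound[of "UNIV - {g0}"] ha_ge[of mm "UNIV - {g0}"] unfolding run_fes by simp
  then have pos: "dd p g0 UNIV * ha (UNIV - {g0}) > 0" using del0_pos dd_g0_pos by simp
  have "dd p g0 UNIV * ha (UNIV - {g0}) \<le> (\<Sum>g\<in>UNIV. dd p g UNIV * ha (UNIV - {g}))"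
    by (rule member_le_sum[where f="\<lambda>g. dd p g UNIV * ha (UNIV - {g})"]) (auto intro!: mult_nonneg_nonneg dd_nonneg ha_nn)
  then show ?thesis unfolding rho_a_alt using pos btot_pos[of UNIV] by simp
qed

lemma alphaA_pos: "alphaA > 0" unfolding alphaA_def using nu0 btot_pos rho_A_pos by simp
lemma betaA_pos: "betaA > 0" unfolding betaA_def using nu1 btot_pos rho_a_pos by simp

end


context fixsetup
begin

definition "pu u = pi_MSS p u \<nu>"
definition "tt u = (\<Sum>x\<in>TR. pu u x)"

lemma ev01: "eventually (\<lambda>u. 0 < u \<and> u \<le> (1::real)) (at_right 0)"
  unfolding eventually_at_right_field by (rule exI[of _ 1]) auto

lemma pu_props: assumes "0 < u" "u \<le> 1"
  shows "\<And>x. pu u x \<ge> 0" "(\<Sum>x\<in>UNIV. pu u x) = 1"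
    "\<And>y. (\<Sum>x\<in>UNIV. pu u x * trans p u \<nu> x y) = pu u y"
    "\<And>y. (\<Sum>x\<in>UNIV. pu u x * transn p u \<nu> t x y) = pu u y"
  using pi_MSS_stat[OF assms] stat_transn[OF pi_MSS_stat[OF assms]] unfolding pu_def stationary_def by auto

lemma pu_split: "pu u {} + pu u UNIV + tt u = (\<Sum>x\<in>UNIV. pu u x)"
  unfolding tt_def by (rule sum_UNIV_split[symmetric])

lemma pu_le_tt: assumes "0 < u" "u \<le> 1" "x \<in> TR" shows "pu u x \<le> tt u"
  unfolding tt_def by (rule member_le_sum) (use assms pu_props(1)[OF assms(1,2)] in auto)

lemma pu_le1: assumes "0 < u" "u \<le> 1" shows "pu u x \<le> 1"
proof -
  have "pu u x \<le> (\<Sum>x\<in>UNIV. pu u x)" by (rule member_le_sum) (use pu_props(1)[OF assms] in auto)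
  then show ?thesis using pu_props(2)[OF assms] by simp
qed

lemma tt_nn: assumes "0 < u" "u \<le> 1" shows "tt u \<ge> 0"
  unfolding tt_def using pu_props(1)[OF assms] by (simp add: sum_nonneg)

definition "KTR u x = (\<Sum>y\<in>TR. transn p u \<nu> mm x y)"

lemma KTR_cont: "((\<lambda>u. KTR u x) \<longlongrightarrow> KTR0 x) (at_right 0)"
  unfolding KTR_def KTR0_def by (intro tendsto_sum transn_cont)

lemma KTR_quot_empty: "\<exists>c. ((\<lambda>u. KTR u {} / u) \<longlongrightarrow> c) (at_right 0)"
proof -
  have "\<forall>y\<in>TR. \<exists>c. ((\<lambda>u. transn p u \<nu> mm {} y / u) \<longlongrightarrow> c) (at_right 0)"
    using transn_quot[OF rep] by (auto simp: TR_def)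
  then obtain c where c: "\<And>y. y \<in> TR \<Longrightarrow> ((\<lambda>u. transn p u \<nu> mm {} y / u) \<longlongrightarrow> c y) (at_right 0)"
    by metis
  have "((\<lambda>u. \<Sum>y\<in>TR. transn p u \<nu> mm {} y / u) \<longlongrightarrow> (\<Sum>y\<in>TR. c y)) (at_right 0)"
    by (intro tendsto_sum c)
  then show ?thesis unfolding KTR_def by (auto simp: sum_divide_distrib)
qed

lemma KTR_quot_UNIV: "\<exists>c. ((\<lambda>u. KTR u UNIV / u) \<longlongrightarrow> c) (at_right 0)"
proof -
  have "\<forall>y\<in>TR. \<exists>c. ((\<lambda>u. transn p u \<nu> mm UNIV y / u) \<longlongrightarrow> c) (at_right 0)"
    using transn_quot_UNIV[OF rep] by (auto simp: TR_def)
  then obtain c where c: "\<And>y. y \<in> TR \<Longrightarrow> ((\<lambda>u. transn p u \<nu> mm UNIV y / u) \<longlongrightarrow> c y) (at_right 0)"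
    by metis
  have "((\<lambda>u. \<Sum>y\<in>TR. transn p u \<nu> mm UNIV y / u) \<longlongrightarrow> (\<Sum>y\<in>TR. c y)) (at_right 0)"
    by (intro tendsto_sum c)
  then show ?thesis unfolding KTR_def by (auto simp: sum_divide_distrib)
qed

lemma tt_eq: assumes "0 < u" "u \<le> 1"
  shows "tt u = pu u {} * KTR u {} + pu u UNIV * KTR u UNIV + (\<Sum>x\<in>TR. pu u x * KTR u x)"
proof -
  have "tt u = (\<Sum>y\<in>TR. \<Sum>x\<in>UNIV. pu u x * transn p u \<nu> mm x y)"
    unfolding tt_def using pu_props(4)[OF assms] by simp
  also have "\<dots> = (\<Sum>x\<in>UNIV. pu u x * KTR u x)"
    unfolding KTR_def by (subst sum.swap) (simp add: sum_distrib_left)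
  also have "\<dots> = pu u {} * KTR u {} + pu u UNIV * KTR u UNIV + (\<Sum>x\<in>TR. pu u x * KTR u x)"
    by (rule sum_UNIV_split)
  finally show ?thesis .
qed

lemma KTR_nn: "0 < u \<Longrightarrow> u \<le> 1 \<Longrightarrow> KTR u x \<ge> 0"
  unfolding KTR_def using transn_nonneg[OF rep] nu0 nu1 by (auto intro!: sum_nonneg)

lemma tt_bound: "\<exists>C. eventually (\<lambda>u. tt u \<le> C * u) (at_right 0)"
proof -
  obtain c1 where c1: "((\<lambda>u. KTR u {} / u) \<longlongrightarrow> c1) (at_right 0)" using KTR_quot_empty by blast
  obtain c2 where c2: "((\<lambda>u. KTR u UNIV / u) \<longlongrightarrow> c2) (at_right 0)" using KTR_quot_UNIV by blast
  have e1: "eventually (\<lambda>u. KTR u {} / u < \<bar>c1\<bar> + 1) (at_right 0)"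
    by (rule order_tendstoD(2)[OF c1]) simp
  have e2: "eventually (\<lambda>u. KTR u UNIV / u < \<bar>c2\<bar> + 1) (at_right 0)"
    by (rule order_tendstoD(2)[OF c2]) simp
  have e3: "eventually (\<lambda>u. \<forall>x\<in>TR. KTR u x < 1 - del0 / 2) (at_right 0)"
  proof (rule eventually_ball_finite)
    show "\<forall>x\<in>TR. eventually (\<lambda>u. KTR u x < 1 - del0 / 2) (at_right 0)"
    proof
      fix x :: "'g set" assume x: "x \<in> TR"
      have "KTR0 x < 1 - del0 / 2" using TR_bound[of x] del0_pos unfolding KTR0_def by simp
      then show "eventually (\<lambda>u. KTR u x < 1 - del0 / 2) (at_right 0)"
        by (rule order_tendstoD(2)[OF KTR_cont])
    qed
  qed simp
  define C where "C = 2 * (\<bar>c1\<bar> + \<bar>c2\<bar> + 2) / del0"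
  have "eventually (\<lambda>u. tt u \<le> C * u) (at_right 0)"
    using e1 e2 e3 ev01
  proof eventually_elim
    case (elim u)
    then have u: "0 < u" "u \<le> 1" by auto
    have k1: "KTR u {} \<le> (\<bar>c1\<bar> + 1) * u" using elim(1) u by (simp add: divide_less_eq)
    have k2: "KTR u UNIV \<le> (\<bar>c2\<bar> + 1) * u" using elim(2) u by (simp add: divide_less_eq)
    have a: "pu u {} * KTR u {} \<le> (\<bar>c1\<bar> + 1) * u"
      using mult_mono[OF pu_le1[OF u, of "{}"] k1] KTR_nn[OF u] pu_props(1)[OF u] u by simp
    have b: "pu u UNIV * KTR u UNIV \<le> (\<bar>c2\<bar> + 1) * u"
      using mult_mono[OF pu_le1[OF u, of UNIV] k2] KTR_nn[OF u] pu_props(1)[OF u] u by simp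
    have c: "(\<Sum>x\<in>TR. pu u x * KTR u x) \<le> (\<Sum>x\<in>TR. pu u x * (1 - del0 / 2))"
      by (rule sum_mono, rule mult_left_mono) (use elim(3) pu_props(1)[OF u] in auto)
    also have "\<dots> = (1 - del0 / 2) * tt u" unfolding tt_def by (simp add: sum_distrib_right mult.commute)
    finally have "tt u \<le> (\<bar>c1\<bar> + 1) * u + (\<bar>c2\<bar> + 1) * u + (1 - del0 / 2) * tt u"
      using tt_eq[OF u] a b by linarith
    then have "del0 / 2 * tt u \<le> (\<bar>c1\<bar> + \<bar>c2\<bar> + 2) * u" by (simp add: algebra_simps)
    then have "tt u \<le> (\<bar>c1\<bar> + \<bar>c2\<bar> + 2) * u / (del0 / 2)"
      using del0_pos by (simp add: le_divide_eq mult.commute)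
    then show ?case unfolding C_def by (simp add: field_simps)
  qed
  then show ?thesis by blast
qed

lemma tt_lim: "(tt \<longlongrightarrow> 0) (at_right 0)"
proof -
  obtain C where C: "eventually (\<lambda>u. tt u \<le> C * u) (at_right 0)" using tt_bound by blast
  show ?thesis
  proof (rule real_tendsto_sandwich[where f="\<lambda>_. 0" and h="\<lambda>u. C * u"])
    show "eventually (\<lambda>u. 0 \<le> tt u) (at_right 0)" using ev01 by eventually_elim (simp add: tt_nn)
    show "eventually (\<lambda>u. tt u \<le> C * u) (at_right 0)" by (rule C)
    have "((\<lambda>u. C * u) \<longlongrightarrow> C * 0) (at_right 0)" by (intro tendsto_intros)
    then show "((\<lambda>u. C * u) \<longlongrightarrow> 0) (at_right 0)" by simp
  qed simp
qed

lemma puTR_lim: assumes "x \<in> TR" shows "((\<lambda>u. pu u x) \<longlongrightarrow> 0) (at_right 0)"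
proof (rule real_tendsto_sandwich[where f="\<lambda>_. 0" and h="tt"])
  show "eventually (\<lambda>u. 0 \<le> pu u x) (at_right 0)" using ev01 by eventually_elim (simp add: pu_props)
  show "eventually (\<lambda>u. pu u x \<le> tt u) (at_right 0)" using ev01 by eventually_elim (simp add: pu_le_tt assms)
qed (simp_all add: tt_lim)

definition "Ga h = \<nu> * (\<Sum>g\<in>UNIV. dd p g {} * (h {g} - h {}))"
definition "GA h = (1 - \<nu>) * (\<Sum>g\<in>UNIV. dd p g UNIV * (h (UNIV - {g}) - h UNIV))"
definition "Wd u x h = (\<Sum>y\<in>UNIV. (trans p u \<nu> x y - trans p 0 \<nu> x y) * h y)"

lemma Wd_lim: "((\<lambda>u. Wd u x h) \<longlongrightarrow> 0) (at_right 0)"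
proof -
  have "((\<lambda>u. Wd u x h) \<longlongrightarrow> (\<Sum>y\<in>UNIV. (trans p 0 \<nu> x y - trans p 0 \<nu> x y) * h y)) (at_right 0)"
    unfolding Wd_def by (intro tendsto_intros trans_cont)
  then show ?thesis by simp
qed

lemma null_bounded: assumes "(f \<longlongrightarrow> 0) F" "eventually (\<lambda>u. \<bar>g u\<bar> \<le> B) F"
  shows "((\<lambda>u. g u * f u) \<longlongrightarrow> (0::real)) F"
proof (rule Lim_null_comparison)
  show "eventually (\<lambda>u. norm (g u * f u) \<le> \<bar>B\<bar> * \<bar>f u\<bar>) F"
    using assms(2) by eventually_elim (auto simp: abs_mult intro: mult_right_mono order.trans[OF _ abs_ge_self])
  have "((\<lambda>u. \<bar>B\<bar> * \<bar>f u\<bar>) \<longlongrightarrow> \<bar>B\<bar> * \<bar>0\<bar>) F" by (intro tendsto_intros assms(1))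
  then show "((\<lambda>u. \<bar>B\<bar> * \<bar>f u\<bar>) \<longlongrightarrow> 0) F" by simp
qed

lemma Phi_lim: "((\<lambda>u. (\<Sum>x\<in>UNIV. pu u x * Wd u x h) / u - (pu u {} * Ga h + pu u UNIV * GA h)) \<longlongrightarrow> 0) (at_right 0)"
proof -
  obtain C where C: "eventually (\<lambda>u. tt u \<le> C * u) (at_right 0)" using tt_bound by blast
  have la: "((\<lambda>u. pu u {} * (Wd u {} h / u - Ga h)) \<longlongrightarrow> 0) (at_right 0)"
  proof (rule null_bounded[where B=1])
    have "((\<lambda>u. Wd u {} h / u) \<longlongrightarrow> Ga h) (at_right 0)" unfolding Wd_def Ga_def by (rule Ga_lim[OF rep])
    then show "((\<lambda>u. Wd u {} h / u - Ga h) \<longlongrightarrow> 0) (at_right 0)" by (rule LIM_zero)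
    show "eventually (\<lambda>u. \<bar>pu u {}\<bar> \<le> 1) (at_right 0)"
      using ev01 by eventually_elim (simp add: pu_props pu_le1)
  qed
  have lA: "((\<lambda>u. pu u UNIV * (Wd u UNIV h / u - GA h)) \<longlongrightarrow> 0) (at_right 0)"
  proof (rule null_bounded[where B=1])
    have "((\<lambda>u. Wd u UNIV h / u) \<longlongrightarrow> GA h) (at_right 0)" unfolding Wd_def GA_def by (rule GA_lim[OF rep])
    then show "((\<lambda>u. Wd u UNIV h / u - GA h) \<longlongrightarrow> 0) (at_right 0)" by (rule LIM_zero)
    show "eventually (\<lambda>u. \<bar>pu u UNIV\<bar> \<le> 1) (at_right 0)"
      using ev01 by eventually_elim (simp add: pu_props pu_le1)
  qed
  have lT: "((\<lambda>u. \<Sum>x\<in>TR. pu u x / u * Wd u x h) \<longlongrightarrow> 0) (at_right 0)"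
  proof -
    show ?thesis
    proof (rule tendsto_null_sum)
      fix x :: "'g set" assume x: "x \<in> TR"
      show "((\<lambda>u. pu u x / u * Wd u x h) \<longlongrightarrow> 0) (at_right 0)"
      proof (rule null_bounded[OF Wd_lim, where B=C])
        show "eventually (\<lambda>u. \<bar>pu u x / u\<bar> \<le> C) (at_right 0)"
          using C ev01
        proof eventually_elim
          case (elim u)
          then have u: "0 < u" "u \<le> 1" by auto
          have "pu u x \<le> C * u" using pu_le_tt[OF u x] elim(1) by linarith
          then show ?case using pu_props(1)[OF u] u by (simp add: divide_le_eq)
        qed
      qed
    qed
  qed
  have "((\<lambda>u. pu u {} * (Wd u {} h / u - Ga h) + pu u UNIV * (Wd u UNIV h / u - GA h)
      + (\<Sum>x\<in>TR. pu u x / u * Wd u x h)) \<longlongrightarrow> 0 + 0 + 0) (at_right 0)"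
    by (intro tendsto_add la lA lT)
  moreover have "(\<Sum>x\<in>UNIV. pu u x * Wd u x h) / u - (pu u {} * Ga h + pu u UNIV * GA h)
     = pu u {} * (Wd u {} h / u - Ga h) + pu u UNIV * (Wd u UNIV h / u - GA h)
      + (\<Sum>x\<in>TR. pu u x / u * Wd u x h)" for u
    by (simp add: sum_UNIV_split[of "\<lambda>x. pu u x * Wd u x h"] add_divide_distrib sum_divide_distrib algebra_simps)
  ultimately show ?thesis by simp
qed

lemma Phi_stat: assumes "0 < u" "u \<le> 1"
  shows "(\<Sum>x\<in>UNIV. pu u x * Wd u x h) = (\<Sum>x\<in>UNIV. pu u x * (h x - (\<Sum>y\<in>UNIV. trans p 0 \<nu> x y * h y)))"
proof -
  have "(\<Sum>x\<in>UNIV. pu u x * (\<Sum>y\<in>UNIV. trans p u \<nu> x y * h y)) = (\<Sum>y\<in>UNIV. (\<Sum>x\<in>UNIV. pu u x * trans p u \<nu> x y) * h y)"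
    by (simp add: sum_distrib_left sum_distrib_right mult.assoc) (rule sum.swap)
  also have "\<dots> = (\<Sum>y\<in>UNIV. pu u y * h y)" using pu_props(3)[OF assms] by simp
  finally have *: "(\<Sum>x\<in>UNIV. pu u x * (\<Sum>y\<in>UNIV. trans p u \<nu> x y * h y)) = (\<Sum>y\<in>UNIV. pu u y * h y)" .
  have "(\<Sum>x\<in>UNIV. pu u x * Wd u x h) = (\<Sum>x\<in>UNIV. pu u x * (\<Sum>y\<in>UNIV. trans p u \<nu> x y * h y))
       - (\<Sum>x\<in>UNIV. pu u x * (\<Sum>y\<in>UNIV. trans p 0 \<nu> x y * h y))"
    unfolding Wd_def by (simp add: left_diff_distrib sum_subtractf right_diff_distrib)
  also have "\<dots> = (\<Sum>x\<in>UNIV. pu u x * (h x - (\<Sum>y\<in>UNIV. trans p 0 \<nu> x y * h y)))"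
    unfolding * by (simp add: right_diff_distrib sum_subtractf)
  finally show ?thesis .
qed

definition "pi0a = betaA / (alphaA + betaA)"
definition "pi0A = alphaA / (alphaA + betaA)"

lemma s_lim: "((\<lambda>u. pu u {}) \<longlongrightarrow> pi0a) (at_right 0)"
  and r_lim: "((\<lambda>u. pu u UNIV) \<longlongrightarrow> pi0A) (at_right 0)"
proof -
  have Wz: "eventually (\<lambda>u. (\<Sum>x\<in>UNIV. pu u x * Wd u x hA) = 0) (at_right 0)"
    using ev01 by eventually_elim (simp add: Phi_stat hA_harm)
  have "((\<lambda>u. (\<Sum>x\<in>UNIV. pu u x * Wd u x hA) / u - (pu u {} * Ga hA + pu u UNIV * GA hA)) \<longlongrightarrow> 0) (at_right 0)"
    by (rule Phi_lim)
  then have l1: "((\<lambda>u. - (pu u {} * alphaA - pu u UNIV * betaA)) \<longlongrightarrow> 0) (at_right 0)"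
    unfolding Ga_def GA_def Ga_hA GA_hA
    by (rule Lim_transform_eventually) (use Wz in \<open>eventually_elim, simp\<close>)
  then have l1': "((\<lambda>u. pu u {} * alphaA - pu u UNIV * betaA) \<longlongrightarrow> 0) (at_right 0)"
    using tendsto_minus by fastforce
  have sum1: "eventually (\<lambda>u. pu u UNIV = 1 - tt u - pu u {}) (at_right 0)"
    using ev01 by eventually_elim (use pu_split pu_props(2) in \<open>simp add: algebra_simps\<close>)
  have "((\<lambda>u. ((pu u {} * alphaA - pu u UNIV * betaA) + betaA * (1 - tt u)) / (alphaA + betaA)) \<longlongrightarrow>
      ((0 + betaA * (1 - 0)) / (alphaA + betaA))) (at_right 0)"
    by (intro tendsto_intros l1' tt_lim) (use alphaA_pos betaA_pos in simp)
  then have "((\<lambda>u. ((pu u {} * alphaA - pu u UNIV * betaA) + betaA * (1 - tt u)) / (alphaA + betaA)) \<longlongrightarrow> pi0a) (at_right 0)"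
    unfolding pi0a_def by simp
  then show sl: "((\<lambda>u. pu u {}) \<longlongrightarrow> pi0a) (at_right 0)"
  proof (rule Lim_transform_eventually)
    show "eventually (\<lambda>u. ((pu u {} * alphaA - pu u UNIV * betaA) + betaA * (1 - tt u)) / (alphaA + betaA) = pu u {}) (at_right 0)"
      using sum1
    proof eventually_elim
      case (elim u)
      show ?case unfolding elim using alphaA_pos betaA_pos by (simp add: field_simps)
    qed
  qed
  have "((\<lambda>u. 1 - tt u - pu u {}) \<longlongrightarrow> 1 - 0 - pi0a) (at_right 0)"
    by (intro tendsto_intros tt_lim sl)
  then have "((\<lambda>u. 1 - tt u - pu u {}) \<longlongrightarrow> pi0A) (at_right 0)"
    unfolding pi0a_def pi0A_def using alphaA_pos betaA_pos by (simp add: field_simps)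
  then show "((\<lambda>u. pu u UNIV) \<longlongrightarrow> pi0A) (at_right 0)"
    by (rule Lim_transform_eventually) (use sum1 in \<open>eventually_elim, simp\<close>)
qed

end


lemma card_sum: "real (card (A :: ('g::finite) set)) = (\<Sum>h\<in>UNIV. if h \<in> A then 1 else 0)"
proof -
  have "(\<Sum>h\<in>UNIV. if h \<in> A then 1 else (0::real)) = (\<Sum>h\<in>UNIV \<inter> A. 1)"
    by (rule sum.inter_restrict[symmetric]) simp
  then show ?thesis by simp
qed

lemma T0N: "(\<Sum>y\<in>UNIV. trans p 0 \<nu> x y * real (card y)) = (\<Sum>e\<in>events. p x e * real (card (step e x)))"
proof -
  have "(\<Sum>y\<in>UNIV. trans p 0 \<nu> x y * real (card y)) = (\<Sum>y\<in>UNIV. \<Sum>e\<in>events. p x e * ((if y = step e x then 1 else 0) * real (card y)))"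
    unfolding trans0 by (simp add: sum_distrib_right mult.assoc)
  also have "\<dots> = (\<Sum>e\<in>events. p x e * (\<Sum>y\<in>UNIV. (if y = step e x then 1 else 0) * real (card y)))"
    by (subst sum.swap) (simp only: sum_distrib_left)
  also have "\<dots> = (\<Sum>e\<in>events. p x e * real (card (step e x)))" by (simp only: sum_delta_mult)
  finally show ?thesis .
qed

lemma Delta_eq: fixes x :: "('g::finite) set" assumes rep: "replacement_rule p"
  shows "Delta_sel p x = (\<Sum>y\<in>UNIV. trans p 0 \<nu> x y * real (card y)) - real (card x)"
proof -
  define I where "I h e = (if h \<in> fst e then (if snd e h \<in> x then 1 else 0) else (0::real))" for h :: 'g and e :: "'g event"
  define J where "J h e = (if h \<in> fst e then (if h \<in> x then 1 else 0) else (0::real))" for h :: 'g and e :: "'g event"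
  have cs: "real (card (step e x)) - real (card x) = (\<Sum>h\<in>UNIV. I h e - J h e)" if e: "e \<in> events" for e
  proof -
    have "real (card (step e x)) - real (card x) = (\<Sum>h\<in>UNIV. (if snd e h \<in> x then 1 else 0) - (if h \<in> x then 1 else 0))"
      unfolding card_sum by (simp add: step_def sum_subtractf)
    also have "\<dots> = (\<Sum>h\<in>UNIV. I h e - J h e)"
      using e by (intro sum.cong) (auto simp: I_def J_def events_def)
    finally show ?thesis .
  qed
  have "(\<Sum>y\<in>UNIV. trans p 0 \<nu> x y * real (card y)) - real (card x)
      = (\<Sum>e\<in>events. p x e * real (card (step e x))) - (\<Sum>e\<in>events. p x e) * real (card x)"
    unfolding T0N using replD(2)[OF rep] by simp
  also have "\<dots> = (\<Sum>e\<in>events. p x e * (real (card (step e x)) - real (card x)))"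
    by (simp add: sum_distrib_right right_diff_distrib sum_subtractf)
  also have "\<dots> = (\<Sum>e\<in>events. p x e * (\<Sum>h\<in>UNIV. I h e - J h e))"
    by (intro sum.cong refl) (simp add: cs)
  also have "\<dots> = (\<Sum>e\<in>events. \<Sum>h\<in>UNIV. p x e * I h e) - (\<Sum>e\<in>events. \<Sum>h\<in>UNIV. p x e * J h e)"
    by (simp add: sum_distrib_left right_diff_distrib sum_subtractf)
  also have "(\<Sum>e\<in>events. \<Sum>h\<in>UNIV. p x e * I h e) = (\<Sum>h\<in>UNIV. \<Sum>e\<in>events. p x e * I h e)"
    by (rule sum.swap)
  also have "(\<Sum>e\<in>events. \<Sum>h\<in>UNIV. p x e * J h e) = (\<Sum>h\<in>UNIV. \<Sum>e\<in>events. p x e * J h e)"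
    by (rule sum.swap)
  also have "(\<Sum>h\<in>UNIV. \<Sum>e\<in>events. p x e * I h e) = (\<Sum>g\<in>x. bb p g x)"
  proof -
    have "(\<Sum>e\<in>events. p x e * I h e) = (\<Sum>g\<in>x. ee p g h x)" for h
    proof -
      have "(\<Sum>g\<in>x. ee p g h x) = (\<Sum>e\<in>events. \<Sum>g\<in>x. if h \<in> fst e \<and> snd e h = g then p x e else 0)"
        unfolding ee_alt by (rule sum.swap)
      also have "\<dots> = (\<Sum>e\<in>events. p x e * I h e)"
      proof (rule sum.cong[OF refl])
        fix e :: "'g event"
        have "(\<Sum>g\<in>x. if h \<in> fst e \<and> snd e h = g then p x e else 0) = (\<Sum>g\<in>x. if g = snd e h then (if h \<in> fst e then p x e else 0) else 0)"
          by (rule sum.cong) auto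
        also have "\<dots> = p x e * I h e" by (simp add: I_def finite_subset[OF subset_UNIV])
        finally show "(\<Sum>g\<in>x. if h \<in> fst e \<and> snd e h = g then p x e else 0) = p x e * I h e" .
      qed
      finally show ?thesis by simp
    qed
    then have "(\<Sum>h\<in>UNIV. \<Sum>e\<in>events. p x e * I h e) = (\<Sum>h\<in>UNIV. \<Sum>g\<in>x. ee p g h x)" by simp
    also have "\<dots> = (\<Sum>g\<in>x. bb p g x)" unfolding bb_def by (rule sum.swap)
    finally show ?thesis .
  qed
  also have "(\<Sum>h\<in>UNIV. \<Sum>e\<in>events. p x e * J h e) = (\<Sum>g\<in>x. dd p g x)"
  proof -
    have "(\<Sum>e\<in>events. p x e * J h e) = (if h \<in> x then dd p h x else 0)" for h
      unfolding dd_alt J_def by (auto intro!: sum.cong)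
    then have "(\<Sum>h\<in>UNIV. \<Sum>e\<in>events. p x e * J h e) = (\<Sum>h\<in>UNIV. if h \<in> x then dd p h x else 0)" by simp
    also have "\<dots> = (\<Sum>h\<in>UNIV \<inter> x. dd p h x)" by (rule sum.inter_restrict[symmetric]) simp
    finally show ?thesis by simp
  qed
  finally show ?thesis unfolding Delta_sel_def by (simp add: sum_subtractf)
qed

lemma Delta_empty: "Delta_sel p {} = 0" unfolding Delta_sel_def by simp

lemma Delta_UNIV: "Delta_sel p UNIV = 0"
  unfolding Delta_sel_def sum_subtractf
  using btot_dd[of p UNIV] unfolding btot_def by simp

context fixsetup
begin

lemma E_lim: "((\<lambda>u. E_MSS p u \<nu> f) \<longlongrightarrow> pi0a * f {} + pi0A * f UNIV) (at_right 0)"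
proof -
  have "((\<lambda>u. pu u {} * f {} + pu u UNIV * f UNIV + (\<Sum>x\<in>TR. pu u x * f x)) \<longlongrightarrow>
      pi0a * f {} + pi0A * f UNIV + (\<Sum>x\<in>TR. 0 * f x)) (at_right 0)"
    by (intro tendsto_intros s_lim r_lim puTR_lim) auto
  moreover have "E_MSS p u \<nu> f = pu u {} * f {} + pu u UNIV * f UNIV + (\<Sum>x\<in>TR. pu u x * f x)" for u
    unfolding E_MSS_def pu_def by (rule sum_UNIV_split)
  ultimately show ?thesis by simp
qed

lemma Lim_E_xbar: "Lim (at_right 0) (\<lambda>u. E_MSS p u \<nu> xbar) = pi0A"
proof -
  have "xbar ({} :: 'g set) = 0" "xbar (UNIV :: 'g set) = 1" by (simp_all add: xbar_def)
  then have "((\<lambda>u. E_MSS p u \<nu> xbar) \<longlongrightarrow> pi0A) (at_right 0)" using E_lim[of xbar] by simp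
  then show ?thesis by (rule tendsto_Lim[rotated]) simp
qed

lemma Lim_pi: "Lim (at_right 0) (\<lambda>v. pi_MSS p v \<nu> x) = (if x = {} then pi0a else if x = UNIV then pi0A else 0)"
proof -
  have "((\<lambda>v. pi_MSS p v \<nu> x) \<longlongrightarrow> (if x = {} then pi0a else if x = UNIV then pi0A else 0)) (at_right 0)"
    using s_lim r_lim puTR_lim[of x] unfolding pu_def by (auto simp: TR_def)
  then show ?thesis by (rule tendsto_Lim[rotated]) simp
qed

definition "Dv = pi0A * ((1 - \<nu>) * btot p UNIV) - pi0a * (\<nu> * btot p {})"

abbreviation "Ncard \<equiv> (\<lambda>y::'g set. real (card y))"

lemma Ga_N: "Ga Ncard = \<nu> * btot p {}"
  unfolding Ga_def btot_dd by simp

lemma GA_N: "GA Ncard = - ((1 - \<nu>) * btot p UNIV)"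
proof -
  have "real (card (UNIV - {g})) - real (card (UNIV :: 'g set)) = -1" for g :: 'g
  proof -
    have "card (UNIV - {g}) = card (UNIV :: 'g set) - 1" by (simp add: card_Diff_singleton)
    moreover have "card (UNIV :: 'g set) \<ge> 1" by (simp add: Suc_leI finite_UNIV_card_ge_0)
    ultimately show ?thesis by (simp add: of_nat_diff)
  qed
  then show ?thesis unfolding GA_def btot_dd by (simp add: sum_negf)
qed

lemma EDelta_quot: "((\<lambda>u. E_MSS p u \<nu> (Delta_sel p) / u) \<longlongrightarrow> Dv) (at_right 0)"
proof -
  have eq: "eventually (\<lambda>u. E_MSS p u \<nu> (Delta_sel p) / u = - ((\<Sum>x\<in>UNIV. pu u x * Wd u x Ncard) / u)) (at_right 0)"
    using ev01
  proof eventually_elim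
    case (elim u)
    then have u: "0 < u" "u \<le> 1" by auto
    have "E_MSS p u \<nu> (Delta_sel p) = (\<Sum>x\<in>UNIV. pu u x * ((\<Sum>y\<in>UNIV. trans p 0 \<nu> x y * real (card y)) - real (card x)))"
      unfolding E_MSS_def pu_def by (simp add: Delta_eq[OF rep, where \<nu>=\<nu>])
    also have "\<dots> = - (\<Sum>x\<in>UNIV. pu u x * Wd u x Ncard)"
      unfolding Phi_stat[OF u] by (simp add: sum_negf[symmetric] algebra_simps)
    finally show ?case by simp
  qed
  have l1: "((\<lambda>u. (\<Sum>x\<in>UNIV. pu u x * Wd u x Ncard) / u - (pu u {} * Ga Ncard + pu u UNIV * GA Ncard)) \<longlongrightarrow> 0) (at_right 0)"
    by (rule Phi_lim)
  have l2: "((\<lambda>u. pu u {} * Ga Ncard + pu u UNIV * GA Ncard) \<longlongrightarrow> pi0a * Ga Ncard + pi0A * GA Ncard) (at_right 0)"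
    by (intro tendsto_intros s_lim r_lim)
  have "((\<lambda>u. - (((\<Sum>x\<in>UNIV. pu u x * Wd u x Ncard) / u - (pu u {} * Ga Ncard + pu u UNIV * GA Ncard))
        + (pu u {} * Ga Ncard + pu u UNIV * GA Ncard))) \<longlongrightarrow> - (0 + (pi0a * Ga Ncard + pi0A * GA Ncard))) (at_right 0)"
    by (intro tendsto_intros l1 l2)
  then have "((\<lambda>u. - ((\<Sum>x\<in>UNIV. pu u x * Wd u x Ncard) / u)) \<longlongrightarrow> Dv) (at_right 0)"
    unfolding Dv_def Ga_N GA_N by simp
  then show ?thesis by (rule Lim_transform_eventually) (use eq in \<open>simp add: eventually_mono\<close>)
qed

lemma E_ext0: "E_MSS_ext p 0 \<nu> (Delta_sel p) = 0"
  unfolding E_MSS_ext_def pi_MSS_ext_def Lim_pi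
  by (intro sum.neutral) (auto simp: Delta_empty Delta_UNIV)

lemma right_deriv: "right_deriv0 (\<lambda>u. E_MSS_ext p u \<nu> (Delta_sel p)) = Dv"
proof -
  let ?F = "\<lambda>u. E_MSS_ext p u \<nu> (Delta_sel p)"
  have eqF: "eventually (\<lambda>y. E_MSS p y \<nu> (Delta_sel p) / y = (?F y - ?F 0) / (y - 0)) (at_right 0)"
    using ev01 by eventually_elim (simp only: E_ext0, simp add: E_MSS_ext_def E_MSS_def pi_MSS_ext_def)
  have lim: "((\<lambda>y. (?F y - ?F 0) / (y - 0)) \<longlongrightarrow> Dv) (at_right 0)"
    by (rule Lim_transform_eventually[OF EDelta_quot eqF])
  have D: "(?F has_real_derivative Dv) (at_right 0)"
    unfolding has_field_derivative_iff by (rule lim)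
  show ?thesis unfolding right_deriv0_def
  proof (rule the_equality[where P="\<lambda>D. (?F has_real_derivative D) (at_right 0)", OF D])
    fix D' assume "(?F has_real_derivative D') (at_right 0)"
    then have "((\<lambda>y. (?F y - ?F 0) / (y - 0)) \<longlongrightarrow> D') (at_right 0)"
      unfolding has_field_derivative_iff .
    then show "D' = Dv" using lim by (rule tendsto_unique[rotated 1]) simp
  qed
qed

end


lemma conv_contract:
  fixes Q L :: "real \<Rightarrow> 'a \<Rightarrow> real" and S :: "'a set"
  assumes fin: "finite S" and B: "B \<ge> 0"
    and ineq: "\<And>u v. 0 < u \<Longrightarrow> u \<le> 1 \<Longrightarrow> 0 < v \<Longrightarrow> v \<le> 1 \<Longrightarrow>
        (\<Sum>y\<in>S. \<bar>Q u y - Q v y\<bar>) \<le> B * (\<Sum>y\<in>S. \<bar>L u y - L v y\<bar>)"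
    and Llim: "\<And>y. y \<in> S \<Longrightarrow> ((\<lambda>u. L u y) \<longlongrightarrow> Lm y) (at_right 0)"
    and yS: "y \<in> S"
  shows "\<exists>l. ((\<lambda>u. Q u y) \<longlongrightarrow> l) (at_right 0)"
proof -
  define v where "v n = inverse (real (Suc n))" for n
  have v01: "0 < v n" "v n \<le> 1" for n by (auto simp: v_def field_simps)
  have vlim: "filterlim v (at_right 0) sequentially"
    unfolding v_def by (rule tendsto_imp_filterlim_at_right[OF LIMSEQ_inverse_real_of_nat]) simp
  define E where "E u = (\<Sum>z\<in>S. \<bar>L u z - Lm z\<bar>)" for u
  have Elim: "(E \<longlongrightarrow> 0) (at_right 0)"
  proof -
    have "(E \<longlongrightarrow> (\<Sum>z\<in>S. \<bar>Lm z - Lm z\<bar>)) (at_right 0)"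
      unfolding E_def by (intro tendsto_intros Llim)
    then show ?thesis by simp
  qed
  have Evlim: "(\<lambda>n. E (v n)) \<longlonglongrightarrow> 0" by (rule filterlim_compose[OF Elim vlim])
  have tri: "\<bar>Q u y - Q w y\<bar> \<le> B * (E u + E w)" if "0 < u" "u \<le> 1" "0 < w" "w \<le> 1" for u w
  proof -
    have "\<bar>Q u y - Q w y\<bar> \<le> (\<Sum>y\<in>S. \<bar>Q u y - Q w y\<bar>)" by (rule member_le_sum) (use yS fin in auto)
    also have "\<dots> \<le> B * (\<Sum>y\<in>S. \<bar>L u y - L w y\<bar>)" by (rule ineq[OF that])
    also have "(\<Sum>y\<in>S. \<bar>L u y - L w y\<bar>) \<le> E u + E w"
    proof -
      have "(\<Sum>y\<in>S. \<bar>L u y - L w y\<bar>) \<le> (\<Sum>y\<in>S. \<bar>L u y - Lm y\<bar> + \<bar>L w y - Lm y\<bar>)"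
        by (rule sum_mono) linarith
      then show ?thesis by (simp add: E_def sum.distrib)
    qed
    then have "B * (\<Sum>y\<in>S. \<bar>L u y - L w y\<bar>) \<le> B * (E u + E w)" using B by (rule mult_left_mono)
    finally show ?thesis .
  qed
  have "Cauchy (\<lambda>n. Q (v n) y)"
  proof (rule metric_CauchyI)
    fix e :: real assume e: "0 < e"
    have "(\<lambda>n. B * E (v n)) \<longlonglongrightarrow> B * 0" by (intro tendsto_intros Evlim)
    then have "eventually (\<lambda>n. B * E (v n) < e / 2) sequentially"
      using e by (intro order_tendstoD(2)) auto
    then obtain M where M: "\<And>n. n \<ge> M \<Longrightarrow> B * E (v n) < e / 2" by (auto simp: eventually_sequentially)
    show "\<exists>M. \<forall>m\<ge>M. \<forall>n\<ge>M. dist (Q (v m) y) (Q (v n) y) < e"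
    proof (intro exI allI impI)
      fix m n assume "M \<le> m" "M \<le> n"
      then have "B * E (v m) < e / 2" "B * E (v n) < e / 2" using M by auto
      moreover have "\<bar>Q (v m) y - Q (v n) y\<bar> \<le> B * (E (v m) + E (v n))" by (rule tri[OF v01 v01])
      ultimately show "dist (Q (v m) y) (Q (v n) y) < e" by (simp add: dist_real_def algebra_simps)
    qed
  qed
  then obtain l where l: "(\<lambda>n. Q (v n) y) \<longlonglongrightarrow> l" unfolding Cauchy_convergent_iff convergent_def by blast
  have bound: "\<bar>Q u y - l\<bar> \<le> B * E u" if u: "0 < u" "u \<le> 1" for u
  proof -
    have "(\<lambda>n. \<bar>Q u y - Q (v n) y\<bar>) \<longlonglongrightarrow> \<bar>Q u y - l\<bar>" by (intro tendsto_intros l)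
    moreover have "(\<lambda>n. B * (E u + E (v n))) \<longlonglongrightarrow> B * (E u + 0)" by (intro tendsto_intros Evlim)
    moreover have "\<exists>N. \<forall>n\<ge>N. \<bar>Q u y - Q (v n) y\<bar> \<le> B * (E u + E (v n))"
      using tri[OF u v01] by blast
    ultimately have "\<bar>Q u y - l\<bar> \<le> B * (E u + 0)" by (rule LIMSEQ_le)
    then show ?thesis by simp
  qed
  have "((\<lambda>u. Q u y - l) \<longlongrightarrow> 0) (at_right 0)"
  proof (rule Lim_null_comparison)
    show "eventually (\<lambda>u. norm (Q u y - l) \<le> B * E u) (at_right 0)"
    proof -
      have "eventually (\<lambda>u. 0 < u \<and> u \<le> (1::real)) (at_right 0)"
        unfolding eventually_at_right_field by (rule exI[of _ 1]) simp
      then show ?thesis by (rule eventually_mono) (simp add: bound)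
    qed
    have "((\<lambda>u. B * E u) \<longlongrightarrow> B * 0) (at_right 0)" by (intro tendsto_intros Elim)
    then show "((\<lambda>u. B * E u) \<longlongrightarrow> 0) (at_right 0)" by simp
  qed
  then have "((\<lambda>u. Q u y) \<longlongrightarrow> l) (at_right 0)" by (rule LIM_zero_cancel)
  then show ?thesis by (rule exI)
qed

context fixsetup
begin

definition "qq u y = pu u y / u"
definition "LL u y = qq u y - (\<Sum>x\<in>TR. qq u x * transn p 0 \<nu> mm x y)"

lemma qq_ineq:
  "(\<Sum>y\<in>TR. \<bar>qq u y - qq v y\<bar>) \<le> (1 / del0) * (\<Sum>y\<in>TR. \<bar>LL u y - LL v y\<bar>)"
proof -
  define w where "w y = qq u y - qq v y" for y
  define l where "l y = LL u y - LL v y" for y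
  have wl: "w y = l y + (\<Sum>x\<in>TR. w x * transn p 0 \<nu> mm x y)" for y
    unfolding w_def l_def LL_def by (simp add: left_diff_distrib sum_subtractf)
  have "(\<Sum>y\<in>TR. \<bar>w y\<bar>) \<le> (\<Sum>y\<in>TR. \<bar>l y\<bar> + (\<Sum>x\<in>TR. \<bar>w x\<bar> * transn p 0 \<nu> mm x y))"
  proof (rule sum_mono)
    fix y
    have "\<bar>(\<Sum>x\<in>TR. w x * transn p 0 \<nu> mm x y)\<bar> \<le> (\<Sum>x\<in>TR. \<bar>w x * transn p 0 \<nu> mm x y\<bar>)" by (rule sum_abs)
    also have "\<dots> = (\<Sum>x\<in>TR. \<bar>w x\<bar> * transn p 0 \<nu> mm x y)" using nn0 by (simp add: abs_mult)
    finally show "\<bar>w y\<bar> \<le> \<bar>l y\<bar> + (\<Sum>x\<in>TR. \<bar>w x\<bar> * transn p 0 \<nu> mm x y)"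
      using wl[of y] by linarith
  qed
  also have "\<dots> = (\<Sum>y\<in>TR. \<bar>l y\<bar>) + (\<Sum>x\<in>TR. \<bar>w x\<bar> * KTR0 x)"
    unfolding KTR0_def by (simp add: sum.distrib sum_distrib_left) (rule sum.swap)
  also have "(\<Sum>x\<in>TR. \<bar>w x\<bar> * KTR0 x) \<le> (\<Sum>x\<in>TR. \<bar>w x\<bar> * (1 - del0))"
    by (rule sum_mono, rule mult_left_mono) (use TR_bound in \<open>auto simp: KTR0_def\<close>)
  finally have "(\<Sum>y\<in>TR. \<bar>w y\<bar>) \<le> (\<Sum>y\<in>TR. \<bar>l y\<bar>) + (1 - del0) * (\<Sum>x\<in>TR. \<bar>w x\<bar>)"
    by (simp add: sum_distrib_left mult.commute)
  then have "del0 * (\<Sum>y\<in>TR. \<bar>w y\<bar>) \<le> (\<Sum>y\<in>TR. \<bar>l y\<bar>)" by (simp add: algebra_simps)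
  then show ?thesis unfolding w_def l_def using del0_pos by (simp add: field_simps)
qed

lemma LL_lim: assumes y: "y \<in> TR" shows "\<exists>Lm. ((\<lambda>u. LL u y) \<longlongrightarrow> Lm) (at_right 0)"
proof -
  have y1: "y \<noteq> {}" "y \<noteq> UNIV" using y unfolding TR_def by blast+
  obtain c1 where c1: "((\<lambda>u. transn p u \<nu> mm {} y / u) \<longlongrightarrow> c1) (at_right 0)"
    using transn_quot[OF rep y1(1), of \<nu> mm] by blast
  obtain c2 where c2: "((\<lambda>u. transn p u \<nu> mm UNIV y / u) \<longlongrightarrow> c2) (at_right 0)"
    using transn_quot_UNIV[OF rep y1(2), of \<nu> mm] by blast
  obtain C where C: "eventually (\<lambda>u. tt u \<le> C * u) (at_right 0)" using tt_bound by blast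
  have l3: "((\<lambda>u. \<Sum>x\<in>TR. qq u x * (transn p u \<nu> mm x y - transn p 0 \<nu> mm x y)) \<longlongrightarrow> 0) (at_right 0)"
  proof (rule tendsto_null_sum)
    fix x :: "'g set" assume x: "x \<in> TR"
    show "((\<lambda>u. qq u x * (transn p u \<nu> mm x y - transn p 0 \<nu> mm x y)) \<longlongrightarrow> 0) (at_right 0)"
    proof (rule null_bounded[where B=C])
      show "((\<lambda>u. transn p u \<nu> mm x y - transn p 0 \<nu> mm x y) \<longlongrightarrow> 0) (at_right 0)"
        by (rule LIM_zero[OF transn_cont])
      show "eventually (\<lambda>u. \<bar>qq u x\<bar> \<le> C) (at_right 0)"
        using C ev01
      proof eventually_elim
        case (elim u)
        then have u: "0 < u" "u \<le> 1" by auto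
        have "pu u x \<le> C * u" using pu_le_tt[OF u x] elim(1) by linarith
        then show ?case using pu_props(1)[OF u] u by (simp add: qq_def divide_le_eq)
      qed
    qed
  qed
  have "((\<lambda>u. pu u {} * (transn p u \<nu> mm {} y / u) + pu u UNIV * (transn p u \<nu> mm UNIV y / u)
      + (\<Sum>x\<in>TR. qq u x * (transn p u \<nu> mm x y - transn p 0 \<nu> mm x y))) \<longlongrightarrow>
      pi0a * c1 + pi0A * c2 + 0) (at_right 0)"
    by (intro tendsto_intros s_lim r_lim c1 c2 l3)
  moreover have "eventually (\<lambda>u. pu u {} * (transn p u \<nu> mm {} y / u) + pu u UNIV * (transn p u \<nu> mm UNIV y / u)
      + (\<Sum>x\<in>TR. qq u x * (transn p u \<nu> mm x y - transn p 0 \<nu> mm x y)) = LL u y) (at_right 0)"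
    using ev01
  proof eventually_elim
    case (elim u)
    then have u: "0 < u" "u \<le> 1" by auto
    have "pu u y = (\<Sum>x\<in>UNIV. pu u x * transn p u \<nu> mm x y)" using pu_props(4)[OF u] by simp
    also have "\<dots> = pu u {} * transn p u \<nu> mm {} y + pu u UNIV * transn p u \<nu> mm UNIV y
        + (\<Sum>x\<in>TR. pu u x * transn p u \<nu> mm x y)" by (rule sum_UNIV_split)
    finally have "qq u y = pu u {} * (transn p u \<nu> mm {} y / u) + pu u UNIV * (transn p u \<nu> mm UNIV y / u)
        + (\<Sum>x\<in>TR. qq u x * transn p u \<nu> mm x y)"
      unfolding qq_def by (simp add: add_divide_distrib sum_divide_distrib)
    then show ?case unfolding LL_def by (simp add: right_diff_distrib sum_subtractf)
  qed
  ultimately have "((\<lambda>u. LL u y) \<longlongrightarrow> pi0a * c1 + pi0A * c2 + 0) (at_right 0)"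
    by (rule Lim_transform_eventually)
  then show ?thesis by blast
qed

lemma qq_lim: "\<exists>q0. \<forall>y\<in>TR. ((\<lambda>u. qq u y) \<longlongrightarrow> q0 y) (at_right 0)"
proof -
  obtain Lm where Lm: "\<And>y. y \<in> TR \<Longrightarrow> ((\<lambda>u. LL u y) \<longlongrightarrow> Lm y) (at_right 0)"
    using LL_lim by metis
  have "\<forall>y\<in>TR. \<exists>l. ((\<lambda>u. qq u y) \<longlongrightarrow> l) (at_right 0)"
  proof
    fix y :: "'g set" assume y: "y \<in> TR"
    show "\<exists>l. ((\<lambda>u. qq u y) \<longlongrightarrow> l) (at_right 0)"
      by (rule conv_contract[of TR "1 / del0" qq LL Lm, OF _ _ qq_ineq Lm y])
         (use del0_pos in simp_all)
  qed
  then show ?thesis by metis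
qed

end


lemma pos_frac: fixes P D a b :: real assumes "P > 0" "D > 0"
  shows "P * (a - b) / D > 0 \<longleftrightarrow> a > b"
proof
  assume h: "P * (a - b) / D > 0"
  show "a > b"
  proof (rule ccontr)
    assume "\<not> a > b"
    then have "a - b \<le> 0" by simp
    then have "P * (a - b) \<le> 0" using assms(1) by (simp add: mult_nonneg_nonpos)
    then have "P * (a - b) / D \<le> 0" using assms(2) by (simp add: divide_nonpos_pos)
    with h show False by simp
  qed
next
  assume "a > b"
  then show "P * (a - b) / D > 0" using assms by simp
qed

lemma sign_alg:
  fixes X Y a b :: real
  assumes "X > 0" "Y > 0" "a > 0" "b > 0"
  shows "X * a / (X * a + Y * b) > X / (X + Y) \<longleftrightarrow> a > b"
    and "X * a / (X * a + Y * b) * Y - Y * b / (X * a + Y * b) * X > 0 \<longleftrightarrow> a > b"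
proof -
  have d1: "X * a + Y * b > 0" "X + Y > 0" using assms by (auto intro: add_pos_pos)
  have e1: "X * a / (X * a + Y * b) - X / (X + Y) = X * Y * (a - b) / ((X * a + Y * b) * (X + Y))"
    using d1 by (simp add: field_simps)
  have e2: "X * a / (X * a + Y * b) * Y - Y * b / (X * a + Y * b) * X = X * Y * (a - b) / (X * a + Y * b)"
  proof -
    have "X * Y * (a - b) / (X * a + Y * b) = (X * a * Y - Y * b * X) / (X * a + Y * b)"
      by (simp add: algebra_simps)
    also have "\<dots> = X * a * Y / (X * a + Y * b) - Y * b * X / (X * a + Y * b)"
      by (rule diff_divide_distrib)
    finally show ?thesis by (simp add: times_divide_eq_left)
  qed
  have XY: "X * Y > 0" using assms by simp
  have "X * Y * (a - b) / ((X * a + Y * b) * (X + Y)) > 0 \<longleftrightarrow> a > b"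
    by (rule pos_frac[OF XY]) (use d1 in simp)
  moreover have "X * a / (X * a + Y * b) > X / (X + Y) \<longleftrightarrow> X * a / (X * a + Y * b) - X / (X + Y) > 0"
    by (simp only: diff_gt_0_iff_gt)
  ultimately show "X * a / (X * a + Y * b) > X / (X + Y) \<longleftrightarrow> a > b" unfolding e1 by simp
  have "X * Y * (a - b) / (X * a + Y * b) > 0 \<longleftrightarrow> a > b"
    by (rule pos_frac[OF XY]) (use d1 in simp)
  then show "X * a / (X * a + Y * b) * Y - Y * b / (X * a + Y * b) * X > 0 \<longleftrightarrow> a > b" using e2 by simp
qed

context fixsetup
begin

definition "q0 = (SOME q0. \<forall>y\<in>TR. ((\<lambda>u. qq u y) \<longlongrightarrow> q0 y) (at_right 0))"

lemma q0_lim: "y \<in> TR \<Longrightarrow> ((\<lambda>u. qq u y) \<longlongrightarrow> q0 y) (at_right 0)"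
  using someI_ex[OF qq_lim] unfolding q0_def by blast

definition "Q0 = (\<Sum>y\<in>TR. q0 y)"

lemma ttq: "((\<lambda>u. tt u / u) \<longlongrightarrow> Q0) (at_right 0)"
proof -
  have "((\<lambda>u. \<Sum>y\<in>TR. qq u y) \<longlongrightarrow> Q0) (at_right 0)" unfolding Q0_def by (intro tendsto_sum q0_lim)
  moreover have "(\<Sum>y\<in>TR. qq u y) = tt u / u" for u unfolding qq_def tt_def by (simp add: sum_divide_distrib)
  ultimately show ?thesis by simp
qed

lemma pi0a_pos: "pi0a > 0" unfolding pi0a_def using alphaA_pos betaA_pos by simp

lemma Q0_pos: assumes two: "a \<noteq> (b::'g)" shows "Q0 > 0"
proof -
  have sing: "{g} \<in> TR" for g :: 'g
  proof -
    have "{g} \<noteq> UNIV"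
    proof
      assume h: "{g} = UNIV"
      have "a \<in> {g}" "b \<in> {g}" unfolding h by simp_all
      then show False using two by simp
    qed
    then show ?thesis by (auto simp: TR_def)
  qed
  have lq: "((\<lambda>u. trans p u \<nu> {} {g} / u) \<longlongrightarrow> \<nu> * dd p g {}) (at_right 0)" for g
  proof -
    have "((\<lambda>u. trans p u \<nu> {} {g} / u) \<longlongrightarrow> T1 p \<nu> {} {g}) (at_right 0)"
      by (rule deriv_quot[OF trans_deriv]) (simp add: trans0_empty[OF rep])
    moreover have "T1 p \<nu> {} {g} = \<nu> * dd p g {}"
    proof -
      have "(\<Sum>g'\<in>UNIV. if {g} = {g'} then dd p g' {} else 0) = dd p g {}" by simp
      then show ?thesis by (simp add: T1_empty)
    qed
    ultimately show ?thesis by simp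
  qed
  have low: "((\<lambda>u. \<Sum>g\<in>UNIV. pu u {} * (trans p u \<nu> {} {g} / u)) \<longlongrightarrow> (\<Sum>g\<in>UNIV. pi0a * (\<nu> * dd p g {}))) (at_right 0)"
    by (intro tendsto_sum tendsto_mult s_lim lq)
  have ev: "eventually (\<lambda>u. (\<Sum>g\<in>UNIV. pu u {} * (trans p u \<nu> {} {g} / u)) \<le> tt u / u) (at_right 0)"
    using ev01
  proof eventually_elim
    case (elim u)
    then have u: "0 < u" "u \<le> 1" by auto
    have "pu u {} * trans p u \<nu> {} {g} \<le> pu u {g}" for g
    proof -
      have "pu u {} * trans p u \<nu> {} {g} \<le> (\<Sum>x\<in>UNIV. pu u x * trans p u \<nu> x {g})"
        by (rule member_le_sum[where f="\<lambda>x. pu u x * trans p u \<nu> x {g}"])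
           (auto intro!: mult_nonneg_nonneg pu_props(1)[OF u] trans_nonneg[OF rep less_imp_le[OF u(1)] u(2) less_imp_le[OF nu0] less_imp_le[OF nu1]])
      then show ?thesis using pu_props(3)[OF u] by simp
    qed
    then have "(\<Sum>g\<in>UNIV. pu u {} * trans p u \<nu> {} {g}) \<le> (\<Sum>g\<in>UNIV. pu u {g})" by (rule sum_mono)
    also have "\<dots> = (\<Sum>y\<in>(\<lambda>g. {g}) ` UNIV. pu u y)" by (subst sum.reindex) (auto simp: inj_on_def)
    also have "\<dots> \<le> tt u" unfolding tt_def
    proof (rule sum_mono2)
      show "finite TR" by simp
      show "(\<lambda>g::'g. {g}) ` UNIV \<subseteq> TR"
      proof (rule subsetI)
        fix y assume "y \<in> (\<lambda>g. {g}) ` (UNIV :: 'g set)"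
        then obtain g where "y = {g}" by blast
        then show "y \<in> TR" using sing[of g] by simp
      qed
      fix y assume "y \<in> TR - (\<lambda>g::'g. {g}) ` UNIV"
      show "0 \<le> pu u y" by (rule pu_props(1)[OF u])
    qed
    finally have "(\<Sum>g\<in>UNIV. pu u {} * trans p u \<nu> {} {g}) / u \<le> tt u / u" using u by (simp add: divide_right_mono)
    then show ?case by (simp add: sum_divide_distrib)
  qed
  have "(\<Sum>g\<in>UNIV. pi0a * (\<nu> * dd p g {})) \<le> Q0"
    by (rule tendsto_le[OF _ ttq low ev]) simp
  moreover have "(\<Sum>g\<in>UNIV. pi0a * (\<nu> * dd p g {})) = pi0a * \<nu> * btot p {}"
    by (simp add: btot_dd sum_distrib_left mult.assoc)
  moreover have "pi0a * \<nu> * btot p {} > 0" using pi0a_pos nu0 btot_pos by simp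
  ultimately show ?thesis by linarith
qed

lemma E_RMC_val: assumes two: "a \<noteq> (b::'g)" shows "E_RMC p \<nu> (Delta_sel p) = Dv / Q0"
proof -
  have Q0: "Q0 > 0" by (rule Q0_pos[OF two])
  have rmc: "pi_RMC p \<nu> x = q0 x / Q0" if x: "x \<in> TR" for x
  proof -
    have "((\<lambda>u. qq u x / (tt u / u)) \<longlongrightarrow> q0 x / Q0) (at_right 0)"
      by (rule tendsto_divide[OF q0_lim[OF x] ttq]) (use Q0 in simp)
    moreover have "eventually (\<lambda>u. qq u x / (tt u / u) = pi_MSS p u \<nu> x / (1 - pi_MSS p u \<nu> {} - pi_MSS p u \<nu> UNIV)) (at_right 0)"
      using ev01
    proof eventually_elim
      case (elim u)
      then have u: "0 < u" "u \<le> 1" by auto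
      have "1 - pu u {} - pu u UNIV = tt u" using pu_split[of u] pu_props(2)[OF u] by simp
      then show ?case using u unfolding qq_def by (simp add: pu_def)
    qed
    ultimately have "((\<lambda>u. pi_MSS p u \<nu> x / (1 - pi_MSS p u \<nu> {} - pi_MSS p u \<nu> UNIV)) \<longlongrightarrow> q0 x / Q0) (at_right 0)"
      by (rule Lim_transform_eventually)
    then show ?thesis unfolding pi_RMC_def by (rule tendsto_Lim[rotated]) simp
  qed
  have sumD: "(\<Sum>x\<in>TR. q0 x * Delta_sel p x) = Dv"
  proof -
    have "((\<lambda>u. \<Sum>x\<in>TR. qq u x * Delta_sel p x) \<longlongrightarrow> (\<Sum>x\<in>TR. q0 x * Delta_sel p x)) (at_right 0)"
      by (intro tendsto_sum tendsto_mult_right q0_lim)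
    moreover have "(\<Sum>x\<in>TR. qq u x * Delta_sel p x) = E_MSS p u \<nu> (Delta_sel p) / u" for u
      unfolding E_MSS_def qq_def sum_UNIV_split[of "\<lambda>x. pi_MSS p u \<nu> x * Delta_sel p x"]
      by (simp add: Delta_empty Delta_UNIV sum_divide_distrib pu_def)
    ultimately have "((\<lambda>u. E_MSS p u \<nu> (Delta_sel p) / u) \<longlongrightarrow> (\<Sum>x\<in>TR. q0 x * Delta_sel p x)) (at_right 0)"
      by simp
    then show ?thesis using EDelta_quot by (rule tendsto_unique[rotated]) simp
  qed
  have "E_RMC p \<nu> (Delta_sel p) = (\<Sum>x\<in>TR. q0 x / Q0 * Delta_sel p x)"
    unfolding E_RMC_def TR_def[symmetric] by (intro sum.cong refl) (simp add: rmc)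
  also have "\<dots> = (\<Sum>x\<in>TR. q0 x * Delta_sel p x) / Q0" by (simp add: sum_divide_distrib)
  finally show ?thesis using sumD by simp
qed

lemma single_case: assumes one: "\<And>a b::'g. a = b"
  shows "E_RMC p \<nu> (Delta_sel p) = 0" "rho_A p \<nu> = rho_a p \<nu>"
proof -
  have TRe: "UNIV - {{}, UNIV} = ({} :: 'g set set)"
  proof -
    have "x = {} \<or> x = UNIV" for x :: "'g set"
    proof (cases "x = {}")
      case False
      then obtain y where y: "y \<in> x" by blast
      have "z \<in> x" for z using y one[of z y] by simp
      then show ?thesis by blast
    qed simp
    then show ?thesis by auto
  qed
  show "E_RMC p \<nu> (Delta_sel p) = 0" unfolding E_RMC_def TRe by simp
  have s1: "{g} = (UNIV :: 'g set)" for g using one by blast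
  have s2: "UNIV - {g} = ({} :: 'g set)" for g using one by blast
  have "ha {} = 1"
  proof -
    have "(\<lambda>t. transn p 0 \<nu> t {} {}) \<longlonglongrightarrow> 1" by (simp add: transn0_empty[OF rep])
    then show ?thesis using ha_lim LIMSEQ_unique by blast
  qed
  then have "rho_a p \<nu> = 1" unfolding rho_a_alt s2 using btot_pos[of UNIV] by (simp add: btot_dd)
  moreover have "rho_A p \<nu> = 1" unfolding rho_A_alt s1 hA_UNIV using btot_pos[of "{}"] by (simp add: btot_dd)
  ultimately show "rho_A p \<nu> = rho_a p \<nu>" by simp
qed

lemma main:
  shows "(rho_A p \<nu> > rho_a p \<nu>
            \<longleftrightarrow> Lim (at_right 0) (\<lambda>u. E_MSS p u \<nu> xbar)
                  > \<nu> * btot p {} / (\<nu> * btot p {} + (1 - \<nu>) * btot p UNIV))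
       \<and> (rho_A p \<nu> > rho_a p \<nu> \<longleftrightarrow> E_RMC p \<nu> (Delta_sel p) > 0)
       \<and> (rho_A p \<nu> > rho_a p \<nu>
            \<longleftrightarrow> right_deriv0 (\<lambda>u. E_MSS_ext p u \<nu> (Delta_sel p)) > 0)"
proof -
  define X where "X = \<nu> * btot p {}"
  define Y where "Y = (1 - \<nu>) * btot p UNIV"
  have X: "X > 0" unfolding X_def using nu0 btot_pos by simp
  have Y: "Y > 0" unfolding Y_def using nu1 btot_pos by simp
  have al: "alphaA = X * rho_A p \<nu>" unfolding alphaA_def X_def by simp
  have be: "betaA = Y * rho_a p \<nu>" unfolding betaA_def Y_def by simp
  have pA: "pi0A = X * rho_A p \<nu> / (X * rho_A p \<nu> + Y * rho_a p \<nu>)" unfolding pi0A_def al be ..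
  have pa: "pi0a = Y * rho_a p \<nu> / (X * rho_A p \<nu> + Y * rho_a p \<nu>)" unfolding pi0a_def al be ..
  have b: "rho_A p \<nu> > rho_a p \<nu> \<longleftrightarrow> Lim (at_right 0) (\<lambda>u. E_MSS p u \<nu> xbar) > X / (X + Y)"
    unfolding Lim_E_xbar pA by (rule sign_alg(1)[OF X Y rho_A_pos rho_a_pos, symmetric])
  have Dv': "Dv = pi0A * Y - pi0a * X" unfolding Dv_def X_def Y_def ..
  have d: "rho_A p \<nu> > rho_a p \<nu> \<longleftrightarrow> Dv > 0"
    unfolding Dv' pA pa by (rule sign_alg(2)[OF X Y rho_A_pos rho_a_pos, symmetric])
  have c: "rho_A p \<nu> > rho_a p \<nu> \<longleftrightarrow> E_RMC p \<nu> (Delta_sel p) > 0"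
  proof (cases "\<exists>a b::'g. a \<noteq> b")
    case True
    then obtain a b :: 'g where ab: "a \<noteq> b" by blast
    show ?thesis unfolding E_RMC_val[OF ab] d using Q0_pos[OF ab] by (simp add: zero_less_divide_iff)
  next
    case False
    then have "\<And>a b::'g. a = b" by blast
    from single_case[OF this] show ?thesis by simp
  qed
  have b': "rho_A p \<nu> > rho_a p \<nu> \<longleftrightarrow> Lim (at_right 0) (\<lambda>u. E_MSS p u \<nu> xbar)
                  > \<nu> * btot p {} / (\<nu> * btot p {} + (1 - \<nu>) * btot p UNIV)"
    using b unfolding X_def Y_def .
  have d': "rho_A p \<nu> > rho_a p \<nu> \<longleftrightarrow> right_deriv0 (\<lambda>u. E_MSS_ext p u \<nu> (Delta_sel p)) > 0"
    unfolding right_deriv by (rule d)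
  show ?thesis by (intro conjI b' c d')
qed

end

theorem theorem4:
  fixes p :: "('g::finite) rule" and \<nu> :: real
  assumes "replacement_rule p" and "fixation_axiom p"
    and "0 < \<nu>" and "\<nu> < 1"
  shows "(rho_A p \<nu> > rho_a p \<nu>
            \<longleftrightarrow> Lim (at_right 0) (\<lambda>u. E_MSS p u \<nu> xbar)
                  > \<nu> * btot p {} / (\<nu> * btot p {} + (1 - \<nu>) * btot p UNIV))
       \<and> (rho_A p \<nu> > rho_a p \<nu> \<longleftrightarrow> E_RMC p \<nu> (Delta_sel p) > 0)
       \<and> (rho_A p \<nu> > rho_a p \<nu>
            \<longleftrightarrow> right_deriv0 (\<lambda>u. E_MSS_ext p u \<nu> (Delta_sel p)) > 0)"
proof -
  interpret fixsetup p \<nu> by unfold_locales (use assms in auto)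
  show ?thesis by (rule main)
qed


end
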